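(* Let $\rho_{ABC},\tau_{AC},\theta_{BC},\omega_C$ be positive definite density operators on the indicated spaces and let $\mathcal{N}=\mathcal{N}_{A\to A'}$, $\mathcal{M}=\mathcal{M}_{B\to B'}$ be quantum channels. Then $$\begin{aligned} \Delta_{\max}(\rho_{ABC};\tau_{AC},\omega_C,\theta_{BC})&\ge\Delta_{\max}(\mathcal{M}(\rho_{ABC});\tau_{AC},\omega_C,\mathcal{M}(\theta_{BC})),\\ \Delta_{\max}(\rho_{ABC};\omega_C,\tau_{AC},\theta_{BC})&\ge\Delta_{\max}(\mathcal{M}(\rho_{ABC});\omega_C,\tau_{AC},\mathcal{M}(\theta_{BC})),\\ \Delta_{\max}(\rho_{ABC};\omega_C,\theta_{BC},\tau_{AC})&\ge\Delta_{\max}(\mathcal{N}(\rho_{ABC});\omega_C,\theta_{BC},\mathcal{N}(\tau_{AC})),\\ \Delta_{\max}(\rho_{ABC};\theta_{BC},\omega_C,\tau_{AC})&\ge\Delta_{\max}(\mathcal{N}(\rho_{ABC});\theta_{BC},\omega_C,\mathcal{N}(\tau_{AC})). \end{aligned}$$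
   Context: Finite-dimensional Hilbert spaces; natural log; operators on subsystems tensored with identities; negative powers taken on the support (generalized inverse). Set $e(\tau)=e(\theta)=+1$, $e(\omega)=-1$; for an ordered triple $(X,Y,Z)$ (a permutation of operators of the types $\tau_{AC},\omega_C,\theta_{BC}$) let $K_{-1}(X,Y,Z)=X^{-e_X/2}Y^{-e_Y/2}Z^{-e_Z}Y^{-e_Y/2}X^{-e_X/2}$ and $\Delta_{\max}(\rho;X,Y,Z)\equiv\log\|\rho^{1/2}K_{-1}(X,Y,Z)\rho^{1/2}\|_\infty$; equivalently, when $K_{-1}$ is invertible, $\Delta_{\max}(\rho;X,Y,Z)=\inf\{\lambda:\rho\le e^{\lambda}K_{-1}(X,Y,Z)^{-1}\}$. E.g. $\Delta_{\max}(\rho;\tau,\omega,\theta)=\log\|\rho^{1/2}\tau^{-1/2}\omega^{1/2}\theta^{-1}\omega^{1/2}\tau^{-1/2}\rho^{1/2}\|_\infty=\inf\{\lambda:\rho\le e^\lambda\tau^{1/2}\omega^{-1/2}\theta\omega^{-1/2}\tau^{1/2}\}$. *)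

theory Defs
  imports "HOL-Analysis.Analysis"
begin

text \<open>A composite system A B C has
index type 'a \<times> 'b \<times> 'c.\<close>

type_synonym 'n op = "complex^'n^'n"

definition adj :: "('n::finite) op \<Rightarrow> 'n op" where
  "adj U = (\<chi> i j. cnj (U$j$i))"

definition hermitian :: "('n::finite) op \<Rightarrow> bool" where
  "hermitian A \<longleftrightarrow> adj A = A"

definition unitary_op :: "('n::finite) op \<Rightarrow> bool" where
  "unitary_op U \<longleftrightarrow> U ** adj U = mat 1 \<and> adj U ** U = mat 1"

definition diag_op :: "(('n::finite) \<Rightarrow> complex) \<Rightarrow> 'n op" where
  "diag_op d = (\<chi> i j. if i = j then d i else 0)"

definition cinner_vec :: "complex^('n::finite) \<Rightarrow> complex^'n \<Rightarrow> complex" where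
  "cinner_vec x y = (\<Sum>i\<in>UNIV. cnj (x$i) * y$i)"

definition posdef :: "('n::finite) op \<Rightarrow> bool" where
  "posdef A \<longleftrightarrow> hermitian A \<and>
     (\<forall>x. x \<noteq> 0 \<longrightarrow> Im (cinner_vec x (A *v x)) = 0 \<and> Re (cinner_vec x (A *v x)) > 0)"

definition mtrace :: "('n::finite) op \<Rightarrow> complex" where
  "mtrace A = (\<Sum>i\<in>UNIV. A$i$i)"

definition density :: "('n::finite) op \<Rightarrow> bool" where
  "density A \<longleftrightarrow> mtrace A = 1"

text \<open>Real power of a Hermitian operator via the spectral decomposition A = U diag(d) U*;
the power acts on the support only (eigenvalues \<le> 0 are mapped to 0), so negative powers
are generalized inverses.  The result does not depend on the chosen decomposition.\<close>

definition mpow :: "('n::finite) op \<Rightarrow> real \<Rightarrow> 'n op" where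
  "mpow A s = (SOME B. \<exists>U d. unitary_op U \<and> A = U ** diag_op (\<lambda>i. complex_of_real (d i)) ** adj U
      \<and> B = U ** diag_op (\<lambda>i. complex_of_real (if d i > 0 then d i powr s else 0)) ** adj U)"

definition opnorm :: "('n::finite) op \<Rightarrow> real" where
  "opnorm X = onorm (\<lambda>v. X *v v)"

definition smat :: "complex \<Rightarrow> ('n::finite) op \<Rightarrow> 'n op" where
  "smat c A = (\<chi> i j. c * A$i$j)"

definition munit :: "('n::finite) \<Rightarrow> 'n \<Rightarrow> 'n op" where
  "munit i j = (\<chi> k l. if k = i \<and> l = j then 1 else 0)"

text \<open>Complete positivity: positivity of all block-matrix extensions id_n \<otimes> \<Phi>.
A block matrix (X i j)_{i,j<n} is positive semidefinite iff its quadratic form is \<ge> 0.\<close>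
definition psd_block :: "nat \<Rightarrow> (nat \<Rightarrow> nat \<Rightarrow> ('n::finite) op) \<Rightarrow> bool" where
  "psd_block n X \<longleftrightarrow> (\<forall>v :: nat \<Rightarrow> complex^'n.
     Im (\<Sum>i<n. \<Sum>j<n. cinner_vec (v i) (X i j *v v j)) = 0 \<and>
     Re (\<Sum>i<n. \<Sum>j<n. cinner_vec (v i) (X i j *v v j)) \<ge> 0)"

definition quantum_channel :: "(('n::finite) op \<Rightarrow> ('m::finite) op) \<Rightarrow> bool" where
  "quantum_channel \<Phi> \<longleftrightarrow>
     (\<forall>X Y. \<Phi> (X + Y) = \<Phi> X + \<Phi> Y) \<and> (\<forall>c X. \<Phi> (smat c X) = smat c (\<Phi> X)) \<and>
     (\<forall>X. mtrace (\<Phi> X) = mtrace X) \<and>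
     (\<forall>n X. psd_block n X \<longrightarrow> psd_block n (\<lambda>i j. \<Phi> (X i j)))"

text \<open>Channel acting on the first tensor factor: \<Phi> \<otimes> id_R.\<close>
definition ext_first :: "(('a::finite) op \<Rightarrow> ('a2::finite) op) \<Rightarrow> ('a \<times> ('r::finite)) op \<Rightarrow> ('a2 \<times> 'r) op" where
  "ext_first \<Phi> X = (\<chi> p q. \<Sum>a\<in>UNIV. \<Sum>a'\<in>UNIV.
      X$(a, snd p)$(a', snd q) * \<Phi> (munit a a')$(fst p)$(fst q))"

text \<open>Channel acting on the middle factor B of A B C: id_A \<otimes> \<Phi> \<otimes> id_C.\<close>
definition ext_mid :: "(('b::finite) op \<Rightarrow> ('b2::finite) op) \<Rightarrow> (('a::finite) \<times> 'b \<times> ('c::finite)) op \<Rightarrow> ('a \<times> 'b2 \<times> 'c) op" where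
  "ext_mid \<Phi> X = (\<chi> p q. \<Sum>b\<in>UNIV. \<Sum>b'\<in>UNIV.
      X$(fst p, b, snd (snd p))$(fst q, b', snd (snd q)) * \<Phi> (munit b b')$(fst (snd p))$(fst (snd q)))"

text \<open>Embeddings of operators on subsystems into A B C (tensoring with identities).\<close>
definition embAC :: "(('a::finite) \<times> ('c::finite)) op \<Rightarrow> ('a \<times> ('b::finite) \<times> 'c) op" where
  "embAC T = (\<chi> p q. if fst (snd p) = fst (snd q)
      then T$(fst p, snd (snd p))$(fst q, snd (snd q)) else 0)"

definition embBC :: "(('b::finite) \<times> ('c::finite)) op \<Rightarrow> (('a::finite) \<times> 'b \<times> 'c) op" where
  "embBC T = (\<chi> p q. if fst p = fst q then T$(snd p)$(snd q) else 0)"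

definition embC :: "('c::finite) op \<Rightarrow> (('a::finite) \<times> ('b::finite) \<times> 'c) op" where
  "embC T = (\<chi> p q. if fst p = fst q \<and> fst (snd p) = fst (snd q) then T$(snd (snd p))$(snd (snd q)) else 0)"

datatype 'n typed_op = Tau "'n op" | Omega "'n op" | Theta "'n op"

fun top_op :: "'n typed_op \<Rightarrow> 'n op" where
  "top_op (Tau X) = X" | "top_op (Omega X) = X" | "top_op (Theta X) = X"

fun top_e :: "'n typed_op \<Rightarrow> real" where
  "top_e (Tau _) = 1" | "top_e (Omega _) = -1" | "top_e (Theta _) = 1"

definition Kminus1 :: "('n::finite) typed_op \<Rightarrow> 'n typed_op \<Rightarrow> 'n typed_op \<Rightarrow> 'n op" where
  "Kminus1 X Y Z =
     mpow (top_op X) (- top_e X / 2) ** mpow (top_op Y) (- top_e Y / 2) ** mpow (top_op Z) (- top_e Z)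
     ** mpow (top_op Y) (- top_e Y / 2) ** mpow (top_op X) (- top_e X / 2)"

definition Delta_max :: "('n::finite) op \<Rightarrow> 'n typed_op \<Rightarrow> 'n typed_op \<Rightarrow> 'n typed_op \<Rightarrow> real" where
  "Delta_max \<rho> X Y Z = ln (opnorm (mpow \<rho> (1/2) ** Kminus1 X Y Z ** mpow \<rho> (1/2)))"

end

theory Submission
  imports Defs
begin

lemma adj_adj[simp]: "adj (adj A) = A"
  by (simp add: adj_def vec_eq_iff)

lemma adj_mult: "adj (A ** B) = adj B ** adj A"
  by (simp add: adj_def vec_eq_iff matrix_matrix_mult_def mult.commute)

lemma adj_mat1[simp]: "adj (mat 1 :: ('n::finite) op) = mat 1"
  by (simp add: adj_def vec_eq_iff mat_def)

lemma adj_add: "adj (A + B) = adj A + adj B"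
  by (simp add: adj_def vec_eq_iff)

lemma adj_diff: "adj (A - B) = adj A - adj B"
  by (simp add: adj_def vec_eq_iff)

lemma adj_diag: "adj (diag_op (\<lambda>i. complex_of_real (d i))) = diag_op (\<lambda>i. complex_of_real (d i))"
  by (simp add: adj_def vec_eq_iff diag_op_def)

lemma ci_adj: "cinner_vec x (A *v y) = cinner_vec (adj A *v x) y"
proof -
  have "cinner_vec x (A *v y) = (\<Sum>i\<in>UNIV. \<Sum>j\<in>UNIV. cnj (x$i) * A$i$j * y$j)"
    unfolding cinner_vec_def matrix_vector_mult_def by (simp add: sum_distrib_left mult_ac)
  also have "\<dots> = (\<Sum>j\<in>UNIV. \<Sum>i\<in>UNIV. cnj (x$i) * A$i$j * y$j)"
    by (rule sum.swap)
  also have "\<dots> = cinner_vec (adj A *v x) y"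
    unfolding cinner_vec_def matrix_vector_mult_def adj_def by (simp add: sum_distrib_left mult_ac)
  finally show ?thesis .
qed

lemma ci_add_right: "cinner_vec x (y + z) = cinner_vec x y + cinner_vec x z"
  by (simp add: cinner_vec_def algebra_simps sum.distrib)
lemma ci_add_left: "cinner_vec (y + z) x = cinner_vec y x + cinner_vec z x"
  by (simp add: cinner_vec_def algebra_simps sum.distrib)
lemma ci_diff_right: "cinner_vec x (y - z) = cinner_vec x y - cinner_vec x z"
  by (simp add: cinner_vec_def algebra_simps sum_subtractf)
lemma ci_diff_left: "cinner_vec (y - z) x = cinner_vec y x - cinner_vec z x"
  by (simp add: cinner_vec_def algebra_simps sum_subtractf)
lemma ci_scale_right: "cinner_vec x (c *s y) = c * cinner_vec x y"
  by (simp add: cinner_vec_def sum_distrib_left mult_ac)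
lemma ci_scale_left: "cinner_vec (c *s y) x = cnj c * cinner_vec y x"
  by (simp add: cinner_vec_def sum_distrib_left mult_ac)
lemma ci_scaleR_right: "cinner_vec x (r *\<^sub>R y) = of_real r * cinner_vec x y"
  unfolding cinner_vec_def vector_scaleR_component by (simp add: sum_distrib_left mult_ac scaleR_conv_of_real)
lemma ci_scaleR_left: "cinner_vec (r *\<^sub>R y) x = of_real r * cinner_vec y x"
  unfolding cinner_vec_def vector_scaleR_component by (simp add: sum_distrib_left mult_ac scaleR_conv_of_real)
lemma ci_zero_left[simp]: "cinner_vec 0 x = 0" by (simp add: cinner_vec_def)
lemma ci_zero_right[simp]: "cinner_vec x 0 = 0" by (simp add: cinner_vec_def)
lemma ci_cnj: "cnj (cinner_vec x y) = cinner_vec y x"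
  by (simp add: cinner_vec_def mult.commute)

lemma cnj_mult_self: "cnj z * z = complex_of_real ((cmod z)^2)"
  by (metis complex_norm_square mult.commute)

lemma ci_self: "cinner_vec x x = complex_of_real ((norm x)^2)"
proof -
  have "cinner_vec x x = (\<Sum>i\<in>UNIV. complex_of_real ((cmod (x$i))^2))"
    unfolding cinner_vec_def by (rule sum.cong) (simp_all only: cnj_mult_self)
  also have "\<dots> = complex_of_real ((norm x)^2)"
    by (simp only: norm_vec_def L2_set_def of_real_sum[symmetric] real_sqrt_pow2[OF sum_nonneg] zero_le_power2)
  finally show ?thesis .
qed

lemma ci_self_Re: "Re (cinner_vec x x) = (norm x)^2" by (simp add: ci_self)
lemma ci_self_Im: "Im (cinner_vec x x) = 0" by (simp add: ci_self)

lemma ci_CS: "cmod (cinner_vec x y) \<le> norm x * norm y"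
proof -
  have "cmod (cinner_vec x y) \<le> (\<Sum>i\<in>UNIV. cmod (x$i) * cmod (y$i))"
    unfolding cinner_vec_def by (rule order_trans[OF norm_sum]) (simp add: norm_mult)
  also have "\<dots> \<le> L2_set (\<lambda>i. cmod (x$i)) UNIV * L2_set (\<lambda>i. cmod (y$i)) UNIV"
    using L2_set_mult_ineq[of "\<lambda>i. cmod (x$i)" "\<lambda>i. cmod (y$i)" UNIV] by simp
  finally show ?thesis by (simp add: norm_vec_def)
qed

lemma ci_eq_zero_iff: "cinner_vec x x = 0 \<longleftrightarrow> x = 0"
  by (simp add: ci_self)

lemma matrix_vec_bl: "bounded_linear (\<lambda>v::complex^('n::finite). X *v v)"
proof -
  have "linear (\<lambda>v::complex^'n. X *v v)" by simp
  then show ?thesis by (simp add: linear_conv_bounded_linear)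
qed

lemma opnorm_bound: "norm (X *v v) \<le> opnorm X * norm v"
  unfolding opnorm_def by (rule onorm[OF matrix_vec_bl])

lemma opnorm_le: "(\<And>v. norm (X *v v) \<le> b * norm v) \<Longrightarrow> opnorm X \<le> b"
  unfolding opnorm_def by (rule onorm_le)

lemma opnorm_nonneg: "opnorm X \<ge> 0"
  unfolding opnorm_def by (rule onorm_pos_le[OF matrix_vec_bl])

lemma mv_scaleR: "A *v (t *\<^sub>R y) = t *\<^sub>R (A *v (y::complex^'n::finite))"
  by (rule linear_cmul[OF matrix_vector_mul_linear])

lemma mv_scale: "A *v (c *s y) = c *s (A *v (y::complex^'n::finite))"
  by (simp add: vec_eq_iff matrix_vector_mult_def sum_distrib_left mult_ac)

lemma mv_add: "A *v (x + y) = A *v x + A *v (y::complex^'n::finite)"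
  by (simp add: matrix_vector_right_distrib)

lemma mv_diff: "A *v (x - y) = A *v x - A *v (y::complex^'n::finite)"
  by (simp add: vec_eq_iff matrix_vector_mult_def sum_subtractf algebra_simps)

lemma herm_ci: "hermitian A \<Longrightarrow> cinner_vec x (A *v y) = cinner_vec (A *v x) y"
  by (simp add: ci_adj hermitian_def)

lemma herm_Im: "hermitian A \<Longrightarrow> Im (cinner_vec x (A *v x)) = 0"
proof -
  assume h: "hermitian A"
  have "cinner_vec x (A *v x) = cnj (cinner_vec x (A *v x))"
    using herm_ci[OF h, of x x] ci_cnj[of "A *v x" x] by simp
  then show ?thesis by (metis Reals_cnj_iff complex_is_Real_iff)
qed

lemma herm_real: "hermitian A \<Longrightarrow> cinner_vec x (A *v x) = complex_of_real (Re (cinner_vec x (A *v x)))"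
  using herm_Im by (simp add: complex_eq_iff)

lemma quad_zero:
  fixes R C :: real
  assumes "\<And>t. 2*t*R \<le> t^2 * C"
  shows "R = 0"
proof (rule ccontr)
  assume R: "R \<noteq> 0"
  define t where "t = R / (\<bar>C\<bar>+1)"
  have pos: "\<bar>C\<bar>+1 > 0" by simp
  have "2*t*R = 2*R^2/(\<bar>C\<bar>+1)" by (simp add: t_def power2_eq_square)
  moreover have "t^2 * C \<le> t^2 * \<bar>C\<bar>" by (simp add: mult_left_mono)
  moreover have "t^2 * \<bar>C\<bar> = R^2 * (\<bar>C\<bar>/(\<bar>C\<bar>+1)) / (\<bar>C\<bar>+1)"
    by (simp add: t_def power2_eq_square field_simps)
  moreover have "R^2 * (\<bar>C\<bar>/(\<bar>C\<bar>+1)) \<le> R^2"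
  proof -
    have "R^2 * \<bar>C\<bar> \<le> R^2 * (\<bar>C\<bar>+1)" by (simp add: mult_left_mono)
    then show ?thesis using pos by (simp add: divide_le_eq)
  qed
  ultimately have "2*R^2/(\<bar>C\<bar>+1) \<le> R^2/(\<bar>C\<bar>+1)"
    using assms[of t] pos by (smt (verit, best) divide_right_mono)
  then have "2*R^2 \<le> R^2" using pos by (simp add: divide_le_cancel)
  then show False using R by (simp add: power2_eq_square) (metis mult_le_0_iff not_le order_antisym_conv zero_le_square)
qed

lemma norm_sq_add_orth:
  assumes "cinner_vec x y = 0"
  shows "(norm (x + t *\<^sub>R y))^2 = (norm x)^2 + t^2 * (norm y)^2"
proof -
  have c: "cinner_vec y x = 0" using assms ci_cnj[of x y] by simp
  have "complex_of_real ((norm (x + t *\<^sub>R y))^2) = cinner_vec (x + t *\<^sub>R y) (x + t *\<^sub>R y)"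
    by (simp add: ci_self)
  also have "\<dots> = complex_of_real ((norm x)^2 + t^2 * (norm y)^2)"
    unfolding ci_add_left ci_add_right ci_scaleR_left ci_scaleR_right assms c
    by (simp add: ci_self power2_eq_square)
  finally show ?thesis by (simp only: of_real_eq_iff)
qed

locale csub =
  fixes W :: "(complex^'n::finite) set"
  assumes add: "x \<in> W \<Longrightarrow> y \<in> W \<Longrightarrow> x + y \<in> W"
    and scale: "x \<in> W \<Longrightarrow> c *s x \<in> W"
begin
lemma scaleR: "x \<in> W \<Longrightarrow> r *\<^sub>R x \<in> W"
proof -
  assume "x \<in> W"
  then have "complex_of_real r *s x \<in> W" by (rule scale)
  moreover have "complex_of_real r *s x = r *\<^sub>R x"
    unfolding vec_eq_iff by (simp only: vector_scaleR_component vector_smult_component) (simp add: scaleR_conv_of_real)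
  ultimately show ?thesis by simp
qed
lemma diff: "x \<in> W \<Longrightarrow> y \<in> W \<Longrightarrow> x - y \<in> W"
  using add[of x "(-1) *\<^sub>R y"] scaleR[of y "-1"] by simp
end

lemma max_eig:
  assumes h: "hermitian A" and W: "csub W" and inv: "\<And>y. y \<in> W \<Longrightarrow> A *v y \<in> W"
    and xW: "x \<in> W" and nx: "norm x = 1"
    and mx: "\<And>y. y \<in> W \<Longrightarrow> norm y = 1 \<Longrightarrow> Re (cinner_vec y (A *v y)) \<le> Re (cinner_vec x (A *v x))"
  shows "A *v x = Re (cinner_vec x (A *v x)) *\<^sub>R x"
proof -
  interpret csub W by (rule W)
  define m where "m = Re (cinner_vec x (A *v x))"
  have key: "Re (cinner_vec y (A *v x)) = 0" if yW: "y \<in> W" and oy: "cinner_vec x y = 0" for y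
  proof -
    define R where "R = Re (cinner_vec y (A *v x))"
    define q where "q = Re (cinner_vec y (A *v y))"
    have oy': "cinner_vec y x = 0" using oy ci_cnj[of x y] by simp
    have "2*t*R \<le> t^2 * (m * (norm y)^2 - q)" for t
    proof -
      define w where "w = x + t *\<^sub>R y"
      have wW: "w \<in> W" unfolding w_def using xW yW by (intro add scaleR)
      have nw: "(norm w)^2 = 1 + t^2 * (norm y)^2"
        unfolding w_def using norm_sq_add_orth[OF oy, of t] nx by simp
      then have "(norm w)^2 \<ge> 1" by simp
      then have wne: "norm w > 0" by (cases "norm w = 0") auto
      define u where "u = (1 / norm w) *\<^sub>R w"
      have uW: "u \<in> W" unfolding u_def using wW by (rule scaleR)
      have nu: "norm u = 1" unfolding u_def using wne by simp
      have "Re (cinner_vec u (A *v u)) = Re (cinner_vec w (A *v w)) / (norm w)^2"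
        unfolding u_def by (simp add: mv_scaleR ci_scaleR_left ci_scaleR_right power2_eq_square)
      with mx[OF uW nu] have le: "Re (cinner_vec w (A *v w)) \<le> m * (norm w)^2"
        unfolding m_def using wne by (simp add: divide_le_eq)
      have "cinner_vec x (A *v y) = cnj (cinner_vec y (A *v x))"
        using herm_ci[OF h, of x y] ci_cnj[of y "A *v x"] by simp
      then have c1: "Re (cinner_vec x (A *v y)) = R" unfolding R_def by simp
      have "Re (cinner_vec w (A *v w)) = m + 2*t*R + t^2 * q"
        unfolding w_def m_def q_def
        by (simp add: mv_add mv_scaleR ci_add_left ci_add_right ci_scaleR_left ci_scaleR_right c1 R_def power2_eq_square algebra_simps)
      with le nw show ?thesis by (simp add: algebra_simps)
    qed
    then show ?thesis using quad_zero unfolding R_def by blast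
  qed
  define z where "z = A *v x - m *\<^sub>R x"
  have zW: "z \<in> W" unfolding z_def using xW by (intro diff inv scaleR)
  have cxx: "cinner_vec x x = 1" using nx by (simp add: ci_self)
  have "cinner_vec x z = 0"
    unfolding z_def m_def ci_diff_right ci_scaleR_right cxx using herm_real[OF h, of x] by simp
  then have czx: "cinner_vec z x = 0" using ci_cnj[of x z] by simp
  have r1: "Re (cinner_vec z (A *v x)) = 0" using key[OF zW \<open>cinner_vec x z = 0\<close>] .
  have "cinner_vec x (\<i> *s z) = 0" by (simp add: ci_scale_right \<open>cinner_vec x z = 0\<close>)
  from key[OF scale[OF zW] this] have r2: "Im (cinner_vec z (A *v x)) = 0"
    by (simp add: ci_scale_left)
  have "cinner_vec z z = cinner_vec z (A *v x - m *\<^sub>R x)"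
    by (simp only: z_def)
  also have "\<dots> = cinner_vec z (A *v x)"
    by (simp only: ci_diff_right ci_scaleR_right czx) simp
  also have "\<dots> = 0" using r1 r2 by (simp add: complex_eq_iff)
  finally have "z = 0" by (simp add: ci_eq_zero_iff)
  then show ?thesis unfolding z_def m_def by simp
qed

lemma cscaleR: "r *\<^sub>R (c::complex) = complex_of_real r * c"
  by (simp add: scaleR_conv_of_real)

lemma ci_closed: "closed {x::complex^'n::finite. \<forall>i\<in>S. cinner_vec (v i) x = 0}"
proof -
  have "{x::complex^'n. \<forall>i\<in>S. cinner_vec (v i) x = 0} = (\<Inter>i\<in>S. {x. cinner_vec (v i) x = 0})" by auto
  moreover have "closed {x::complex^'n. cinner_vec (v i) x = 0}" for i
    unfolding cinner_vec_def by (intro closed_Collect_eq continuous_intros)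
  ultimately show ?thesis by auto
qed

lemma eig_step:
  fixes A :: "('n::finite) op" and S :: "'n set" and v :: "'n \<Rightarrow> complex^'n"
  assumes h: "hermitian A"
    and on: "\<forall>i\<in>S. \<forall>k\<in>S. cinner_vec (v i) (v k) = (if i = k then 1 else 0)"
    and ev: "\<forall>i\<in>S. A *v v i = d i *\<^sub>R v i" and j: "j \<notin> S"
  shows "\<exists>x l. norm x = 1 \<and> (\<forall>i\<in>S. cinner_vec (v i) x = 0) \<and> A *v x = l *\<^sub>R x"
proof -
  define W where "W = {x::complex^'n. \<forall>i\<in>S. cinner_vec (v i) x = 0}"
  have cs: "csub W" unfolding W_def by unfold_locales (auto simp: ci_add_right ci_scale_right)
  have inv: "A *v y \<in> W" if "y \<in> W" for y
  proof -
    have "cinner_vec (v i) (A *v y) = 0" if i: "i \<in> S" for i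
      using \<open>y \<in> W\<close> i ev unfolding W_def by (simp add: herm_ci[OF h] ci_scaleR_left)
    then show ?thesis unfolding W_def by auto
  qed
  define L where "L = (\<lambda>x::complex^'n. \<chi> i. if i \<in> S then cinner_vec (v i) x else 0)"
  have lin: "linear L"
    by (rule linearI) (simp_all only: L_def vec_eq_iff ci_add_right ci_scaleR_right vector_scaleR_component
       vector_add_component vec_lambda_beta cscaleR; simp)+
  have "\<exists>x. x \<noteq> 0 \<and> L x = 0"
  proof (rule ccontr)
    assume "\<not> ?thesis"
    then have "inj L" using linear_injective_0[OF lin] by auto
    then have "surj L" using eucl.linear_inj_imp_surj[OF lin] by auto
    then obtain x where "L x = axis j 1" by (metis surjD)
    then have "L x $ j = 1" by (simp add: axis_def)
    moreover have "L x $ j = 0" using j by (simp add: L_def)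
    ultimately show False by simp
  qed
  then obtain x0 where x0: "x0 \<noteq> 0" and L0: "L x0 = 0" by blast
  have "x0 \<in> W" unfolding W_def mem_Collect_eq
  proof
    fix i assume i: "i \<in> S"
    from arg_cong[OF L0, of "\<lambda>z. z$i"] show "cinner_vec (v i) x0 = 0" by (simp add: L_def i)
  qed
  note x0 = x0 this
  define K where "K = W \<inter> sphere 0 1"
  have cK: "compact K" unfolding K_def W_def by (intro closed_Int_compact ci_closed compact_sphere)
  have "(1 / norm x0) *\<^sub>R x0 \<in> K"
    unfolding K_def using x0 csub.scaleR[OF cs] by simp
  then have neK: "K \<noteq> {}" by auto
  have cont: "continuous_on K (\<lambda>y. Re (cinner_vec y (A *v y)))"
    unfolding cinner_vec_def matrix_vector_mult_def by (intro continuous_intros)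
  obtain xm where xm: "xm \<in> K" and mx: "\<And>y. y \<in> K \<Longrightarrow> Re (cinner_vec y (A *v y)) \<le> Re (cinner_vec xm (A *v xm))"
    using continuous_attains_sup[OF cK neK cont] by blast
  have "A *v xm = Re (cinner_vec xm (A *v xm)) *\<^sub>R xm"
    by (rule max_eig[OF h cs inv]) (use xm mx in \<open>auto simp: K_def\<close>)
  then show ?thesis using xm unfolding K_def W_def by auto
qed

lemma eig_family:
  fixes A :: "('n::finite) op" and S :: "'n set"
  assumes h: "hermitian A" and fin: "finite S"
  shows "\<exists>v d. (\<forall>i\<in>S. \<forall>k\<in>S. cinner_vec (v i) (v k) = (if i = k then 1 else 0)) \<and> (\<forall>i\<in>S. A *v v i = d i *\<^sub>R v i)"
  using fin
proof (induction S rule: finite_induct)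
  case empty
  then show ?case by auto
next
  case (insert j S)
  then obtain v d where on: "\<forall>i\<in>S. \<forall>k\<in>S. cinner_vec (v i) (v k) = (if i = k then 1 else 0)"
    and ev: "\<forall>i\<in>S. A *v v i = d i *\<^sub>R v i" by blast
  obtain x l where x: "norm x = 1" "\<forall>i\<in>S. cinner_vec (v i) x = 0" "A *v x = l *\<^sub>R x"
    using eig_step[OF h on ev insert(2)] by blast
  have x': "\<forall>i\<in>S. cinner_vec x (v i) = 0" using x(2) ci_cnj by (metis complex_cnj_zero)
  have xx: "cinner_vec x x = 1" using x(1) by (simp add: ci_self)
  show ?case
    apply (rule exI[of _ "v(j:=x)"], rule exI[of _ "d(j:=l)"])
    using on ev x x' xx insert(2) by auto
qed

definition decomp :: "('n::finite) op \<Rightarrow> 'n op \<Rightarrow> ('n \<Rightarrow> real) \<Rightarrow> bool" where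
  "decomp A U d \<longleftrightarrow> unitary_op U \<and> A = U ** diag_op (\<lambda>i. complex_of_real (d i)) ** adj U"

lemma mult_diag_right: "(X ** diag_op g) $ i $ k = X $ i $ k * g k"
  by (simp add: matrix_matrix_mult_def diag_op_def if_distrib[of "\<lambda>y. _ * y"] cong: if_cong)

lemma mult_diag_left: "(diag_op g ** X) $ i $ k = g i * X $ i $ k"
  by (simp add: matrix_matrix_mult_def diag_op_def if_distrib[of "\<lambda>y. y * _"] cong: if_cong)

lemma spectral:
  fixes A :: "('n::finite) op"
  assumes h: "hermitian A"
  shows "\<exists>U d. decomp A U d"
proof -
  obtain v :: "'n \<Rightarrow> complex^'n" and d :: "'n \<Rightarrow> real" where on: "\<forall>i k. cinner_vec (v i) (v k) = (if i = k then 1 else 0)"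
    and ev: "\<forall>i. A *v v i = d i *\<^sub>R v i"
    using eig_family[OF h, of UNIV] by auto
  define U :: "'n op" where "U = (\<chi> r k. v k $ r)"
  have "adj U ** U = mat 1"
  proof -
    have "(adj U ** U) $ k $ l = cinner_vec (v k) (v l)" for k l
      by (simp add: U_def adj_def matrix_matrix_mult_def cinner_vec_def)
    then show ?thesis using on by (simp add: vec_eq_iff mat_def)
  qed
  then have un: "unitary_op U" unfolding unitary_op_def using matrix_left_right_inverse by blast
  define D where "D = diag_op (\<lambda>i. complex_of_real (d i))"
  have "A ** U = U ** D"
  proof -
    have "(A ** U) $ r $ k = (A *v v k) $ r" for r k
      by (simp add: U_def matrix_matrix_mult_def matrix_vector_mult_def)
    moreover have "(U ** D) $ r $ k = (d k *\<^sub>R v k) $ r" for r k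
      unfolding D_def mult_diag_right vector_scaleR_component cscaleR by (simp add: U_def mult.commute)
    ultimately show ?thesis using ev by (simp add: vec_eq_iff)
  qed
  then have "A = U ** D ** adj U"
    using un unfolding unitary_op_def
    by (metis matrix_mul_assoc matrix_mul_rid)
  then show ?thesis using un unfolding decomp_def D_def by blast
qed

lemma diag_fun_commute:
  fixes d1 d2 :: "'n::finite \<Rightarrow> real" and f :: "real \<Rightarrow> complex"
  assumes u: "unitary_op U" and v: "unitary_op V"
    and eq: "U ** diag_op (\<lambda>i. complex_of_real (d1 i)) ** adj U = V ** diag_op (\<lambda>i. complex_of_real (d2 i)) ** adj V"
  shows "U ** diag_op (\<lambda>i. f (d1 i)) ** adj U = V ** diag_op (\<lambda>i. f (d2 i)) ** adj V"
proof -
  define W where "W = adj V ** U"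
  define D1 where "D1 = diag_op (\<lambda>i. complex_of_real (d1 i))"
  define D2 where "D2 = diag_op (\<lambda>i. complex_of_real (d2 i))"
  define F1 where "F1 = diag_op (\<lambda>i. f (d1 i))"
  define F2 where "F2 = diag_op (\<lambda>i. f (d2 i))"
  have uu: "adj U ** U = mat 1" "U ** adj U = mat 1" and vv: "adj V ** V = mat 1" "V ** adj V = mat 1"
    using u v unfolding unitary_op_def by auto
  have "W ** D1 = adj V ** (U ** D1 ** adj U) ** U"
    unfolding W_def by (simp add: matrix_mul_assoc[symmetric] uu)
  also have "\<dots> = adj V ** (V ** D2 ** adj V) ** U" using eq unfolding D1_def D2_def by simp
  also have "\<dots> = D2 ** W"
    unfolding W_def by (simp add: matrix_mul_assoc vv)
  finally have WD: "W ** D1 = D2 ** W" .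
  have "W $ i $ k * f (d1 k) = f (d2 i) * W $ i $ k" for i k
  proof -
    have "W $ i $ k * complex_of_real (d1 k) = complex_of_real (d2 i) * W $ i $ k"
      using arg_cong[OF WD, of "\<lambda>X. X $ i $ k"] unfolding D1_def D2_def mult_diag_right mult_diag_left .
    then have "W $ i $ k = 0 \<or> d1 k = d2 i" by (simp add: mult.commute)
    then show ?thesis by auto
  qed
  then have WF: "W ** F1 = F2 ** W" unfolding F1_def F2_def by (simp add: vec_eq_iff mult_diag_right mult_diag_left)
  have VW: "V ** W = U" unfolding W_def by (simp add: matrix_mul_assoc vv)
  have "U ** F1 ** adj U = V ** (W ** F1) ** adj U" by (simp add: VW[symmetric] matrix_mul_assoc)
  also have "\<dots> = V ** F2 ** (W ** adj U)" by (simp add: WF matrix_mul_assoc)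
  also have "W ** adj U = adj V" unfolding W_def by (simp add: matrix_mul_assoc[symmetric] uu)
  finally show ?thesis unfolding F1_def F2_def .
qed

definition pfun :: "real \<Rightarrow> real \<Rightarrow> complex" where
  "pfun s x = complex_of_real (if x > 0 then x powr s else 0)"

lemma mpow_decomp:
  assumes "decomp A U d"
  shows "mpow A s = U ** diag_op (\<lambda>i. pfun s (d i)) ** adj U"
proof -
  let ?P = "\<lambda>B. \<exists>U d. unitary_op U \<and> A = U ** diag_op (\<lambda>i. complex_of_real (d i)) ** adj U
      \<and> B = U ** diag_op (\<lambda>i. complex_of_real (if d i > 0 then d i powr s else 0)) ** adj U"
  have "?P (U ** diag_op (\<lambda>i. pfun s (d i)) ** adj U)"
    using assms unfolding decomp_def pfun_def by blast
  then have "?P (mpow A s)" unfolding mpow_def by (rule someI)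
  then obtain U' d' where u': "unitary_op U'" "A = U' ** diag_op (\<lambda>i. complex_of_real (d' i)) ** adj U'"
    and m: "mpow A s = U' ** diag_op (\<lambda>i. pfun s (d' i)) ** adj U'"
    unfolding pfun_def by blast
  show ?thesis unfolding m
    by (rule diag_fun_commute[OF u'(1)]) (use assms u' in \<open>auto simp: decomp_def\<close>)
qed

lemma diag_mult: "diag_op f ** diag_op g = diag_op (\<lambda>i. f i * g i)"
  by (simp add: vec_eq_iff mult_diag_right) (simp add: diag_op_def)

lemma diag_mv: "(diag_op g *v w) $ i = g i * w $ i"
  by (simp add: matrix_vector_mult_def diag_op_def if_distrib[of "\<lambda>y. y * _"] cong: if_cong)

lemma pfun_mult: "pfun s x * pfun t x = pfun (s + t) x"
  by (simp add: pfun_def powr_add)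

lemma pfun_real: "pfun s x = complex_of_real (Re (pfun s x))"
  by (simp add: pfun_def)

lemma unitaryD: "unitary_op U \<Longrightarrow> adj U ** U = mat 1" "unitary_op U \<Longrightarrow> U ** adj U = mat 1"
  by (auto simp: unitary_op_def)

lemma conj3: "unitary_op U \<Longrightarrow> (U ** F ** adj U) ** (U ** G ** adj U) = U ** (F ** G) ** adj U"
proof -
  assume u: "unitary_op U"
  have "(U ** F ** adj U) ** (U ** G ** adj U) = U ** F ** (adj U ** U) ** G ** adj U"
    by (simp add: matrix_mul_assoc)
  then show ?thesis using unitaryD(1)[OF u] by (simp add: matrix_mul_assoc)
qed

lemma decomp_unitary: "decomp A U d \<Longrightarrow> unitary_op U"
  by (simp add: decomp_def)

lemma decomp_eq: "decomp A U d \<Longrightarrow> A = U ** diag_op (\<lambda>i. complex_of_real (d i)) ** adj U"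
  by (simp add: decomp_def)

lemma mpow_mult: "decomp A U d \<Longrightarrow> mpow A s ** mpow A t = mpow A (s + t)"
proof -
  assume dA: "decomp A U d"
  show ?thesis by (simp add: mpow_decomp[OF dA] conj3[OF decomp_unitary[OF dA]] diag_mult pfun_mult)
qed

lemma adj_conj: "adj (U ** F ** adj U) = U ** adj F ** adj U"
  by (simp add: adj_mult matrix_mul_assoc)

lemma mpow_herm: "decomp A U d \<Longrightarrow> hermitian (mpow A s)"
  unfolding hermitian_def
  by (simp add: mpow_decomp adj_conj pfun_def adj_diag[of "\<lambda>i. if 0 < d i then d i powr s else 0", simplified])

lemma decomp_herm: "decomp A U d \<Longrightarrow> hermitian A"
  unfolding hermitian_def decomp_def by (simp add: adj_conj adj_diag)

lemma cnj_mult_lc: "cnj z * (a * z) = a * complex_of_real ((cmod z)^2)"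
  by (metis cnj_mult_self mult.left_commute)

lemma ci_diag: "cinner_vec w (diag_op (\<lambda>i. complex_of_real (c i)) *v w) = complex_of_real (\<Sum>i\<in>UNIV. c i * (cmod (w$i))^2)"
  unfolding cinner_vec_def diag_mv of_real_sum
  by (rule sum.cong) (simp_all only: cnj_mult_lc of_real_mult)

lemma qf_conj: "cinner_vec x ((U ** F ** adj U) *v x) = cinner_vec (adj U *v x) (F *v (adj U *v x))"
  by (simp add: matrix_vector_mul_assoc[symmetric] ci_adj)

lemma norm_adjU: "unitary_op U \<Longrightarrow> norm (adj U *v x) = norm x"
proof -
  assume u: "unitary_op U"
  have "cinner_vec (adj U *v x) (adj U *v x) = cinner_vec x x"
    by (simp add: ci_adj[symmetric] matrix_vector_mul_assoc unitaryD(2)[OF u])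
  then have "complex_of_real ((norm (adj U *v x))^2) = complex_of_real ((norm x)^2)"
    by (simp only: ci_self)
  then have "(norm (adj U *v x))^2 = (norm x)^2" by (simp only: of_real_eq_iff)
  then show ?thesis by (metis norm_ge_zero power2_eq_iff_nonneg)
qed

lemma norm_U: "unitary_op U \<Longrightarrow> norm (U *v x) = norm x"
  using norm_adjU[of "adj U"] by (simp add: unitary_op_def)

lemma qf_decomp: "decomp A U d \<Longrightarrow> cinner_vec x (A *v x) = complex_of_real (\<Sum>i\<in>UNIV. d i * (cmod ((adj U *v x)$i))^2)"
  unfolding decomp_def by (simp add: qf_conj ci_diag)

lemma axis_sum: "(\<Sum>i\<in>UNIV. c i * (cmod ((axis k (1::complex))$i))^2) = c k"
  by (simp add: axis_def if_distrib[of cmod] if_distrib[of "\<lambda>y. y^2"] if_distrib[of "\<lambda>y. _ * y"] cong: if_cong)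

lemma decomp_col: "decomp A U d \<Longrightarrow> cinner_vec (U *v axis k 1) (A *v (U *v axis k 1)) = complex_of_real (d k)"
proof -
  assume dA: "decomp A U d"
  have "adj U *v (U *v axis k 1) = axis k 1"
    using unitaryD(1)[OF decomp_unitary[OF dA]] by (simp add: matrix_vector_mul_assoc)
  then show ?thesis by (simp add: qf_decomp[OF dA] axis_sum)
qed

lemma decomp_posdef: "decomp A U d \<Longrightarrow> posdef A \<Longrightarrow> d k > 0"
proof -
  assume dA: "decomp A U d" and p: "posdef A"
  have "norm (U *v axis k (1::complex)) = 1" using dA by (simp add: norm_U decomp_def)
  then have "U *v axis k (1::complex) \<noteq> 0" by auto
  with p have "Re (cinner_vec (U *v axis k 1) (A *v (U *v axis k 1))) > 0" unfolding posdef_def by blast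
  then show ?thesis by (simp add: decomp_col[OF dA])
qed

definition psd :: "('n::finite) op \<Rightarrow> bool" where
  "psd A \<longleftrightarrow> (\<forall>x. Im (cinner_vec x (A *v x)) = 0 \<and> Re (cinner_vec x (A *v x)) \<ge> 0)"

lemma decomp_psd: "decomp A U d \<Longrightarrow> psd A \<Longrightarrow> d k \<ge> 0"
proof -
  assume dA: "decomp A U d" and p: "psd A"
  then have "Re (cinner_vec (U *v axis k 1) (A *v (U *v axis k 1))) \<ge> 0" unfolding psd_def by blast
  then show ?thesis by (simp add: decomp_col[OF dA])
qed

lemma posdef_psd: "posdef A \<Longrightarrow> psd A"
  unfolding posdef_def psd_def by (metis ci_zero_left less_eq_real_def zero_complex.simps)

lemma mpow_one: "decomp A U d \<Longrightarrow> (\<And>k. d k \<ge> 0) \<Longrightarrow> mpow A 1 = A"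
proof -
  assume dA: "decomp A U d" and nn: "\<And>k. d k \<ge> 0"
  have "(\<lambda>i. pfun 1 (d i)) = (\<lambda>i. complex_of_real (d i))"
    using nn by (auto simp: pfun_def fun_eq_iff) (metis less_eq_real_def)
  then show ?thesis by (subst (2) decomp_eq[OF dA]) (simp add: mpow_decomp[OF dA])
qed

lemma mpow_zero_pd: "decomp A U d \<Longrightarrow> (\<And>k. d k > 0) \<Longrightarrow> mpow A 0 = mat 1"
proof -
  assume dA: "decomp A U d" and nn: "\<And>k. d k > 0"
  have "pfun 0 (d i) = 1" for i using nn[of i] by (simp add: pfun_def)
  then have "(\<lambda>i. pfun 0 (d i)) = (\<lambda>i. 1)" by auto
  moreover have "diag_op (\<lambda>i. 1::complex) = mat 1" by (simp add: diag_op_def mat_def vec_eq_iff)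
  ultimately show ?thesis using unitaryD[OF decomp_unitary[OF dA]] mpow_decomp[OF dA, of 0] by (metis matrix_mul_rid)
qed

lemma qf_mpow0: "decomp A U d \<Longrightarrow> Re (cinner_vec y (mpow A 0 *v y)) \<le> (norm y)^2"
proof -
  assume dA: "decomp A U d"
  have "(\<lambda>i. pfun 0 (d i)) = (\<lambda>i. complex_of_real (if d i > 0 then 1 else 0))"
    by (auto simp: pfun_def fun_eq_iff)
  then have "mpow A 0 = U ** diag_op (\<lambda>i. complex_of_real (if d i > 0 then 1 else 0)) ** adj U"
    by (simp add: mpow_decomp[OF dA])
  then have "Re (cinner_vec y (mpow A 0 *v y)) = (\<Sum>i\<in>UNIV. (if d i > 0 then 1 else 0) * (cmod ((adj U *v y)$i))^2)"
    by (simp add: qf_conj ci_diag)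
  also have "\<dots> \<le> (\<Sum>i\<in>UNIV. (cmod ((adj U *v y)$i))^2)"
    by (rule sum_mono) simp
  also have "\<dots> = (norm (adj U *v y))^2" by (simp add: norm_vec_def L2_set_def sum_nonneg)
  also have "\<dots> = (norm y)^2" using dA by (simp add: norm_adjU decomp_def)
  finally show ?thesis .
qed

lemma herm_psd_sq: "hermitian P \<Longrightarrow> cinner_vec x ((P ** P) *v x) = complex_of_real ((norm (P *v x))^2)"
  by (simp add: matrix_vector_mul_assoc[symmetric] herm_ci ci_self)

lemma opnorm_mult: "opnorm (A ** B) \<le> opnorm A * opnorm B"
proof (rule opnorm_le)
  fix v
  have "norm ((A ** B) *v v) = norm (A *v (B *v v))" by (simp add: matrix_vector_mul_assoc)
  also have "\<dots> \<le> opnorm A * norm (B *v v)" by (rule opnorm_bound)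
  also have "\<dots> \<le> opnorm A * (opnorm B * norm v)"
    by (rule mult_left_mono[OF opnorm_bound opnorm_nonneg])
  finally show "norm ((A ** B) *v v) \<le> opnorm A * opnorm B * norm v" by (simp add: mult_ac)
qed

lemma norm_sq_AtA: "(norm (X *v v))^2 \<le> norm v * norm ((adj X ** X) *v v)"
proof -
  have "(norm (X *v v))^2 = Re (cinner_vec (X *v v) (X *v v))" by (simp add: ci_self)
  also have "\<dots> = Re (cinner_vec v ((adj X ** X) *v v))"
    by (simp add: ci_adj matrix_vector_mul_assoc[symmetric])
  also have "\<dots> \<le> cmod (cinner_vec v ((adj X ** X) *v v))" by (rule complex_Re_le_cmod)
  also have "\<dots> \<le> norm v * norm ((adj X ** X) *v v)" by (rule ci_CS)
  finally show ?thesis .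
qed

lemma sq_le_imp: "(a::real)^2 \<le> b * c \<Longrightarrow> 0 \<le> b \<Longrightarrow> 0 \<le> c \<Longrightarrow> a \<le> sqrt b * sqrt c"
  by (metis real_sqrt_le_iff real_sqrt_mult real_sqrt_abs abs_ge_self order_trans)

lemma opnorm_le_AtA: "(opnorm X)^2 \<le> opnorm (adj X ** X)"
proof -
  have "opnorm X \<le> sqrt (opnorm (adj X ** X))"
  proof (rule opnorm_le)
    fix v
    have "(norm (X *v v))^2 \<le> norm v * (opnorm (adj X ** X) * norm v)"
      using norm_sq_AtA[of X v] mult_left_mono[OF opnorm_bound norm_ge_zero] order_trans by blast
    then have "(norm (X *v v))^2 \<le> (sqrt (opnorm (adj X ** X)) * norm v)^2"
      using opnorm_nonneg[of "adj X ** X"] by (simp add: power_mult_distrib power2_eq_square mult_ac)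
    then show "norm (X *v v) \<le> sqrt (opnorm (adj X ** X)) * norm v"
      by (rule power2_le_imp_le) (simp add: opnorm_nonneg)
  qed
  then show ?thesis using opnorm_nonneg
    by (metis power2_le_imp_le power_mono real_sqrt_pow2 opnorm_nonneg)
qed

lemma opnorm_adj_le: "opnorm X \<le> opnorm (adj X)"
proof -
  have "(opnorm X)^2 \<le> opnorm (adj X) * opnorm X"
    using opnorm_le_AtA[of X] opnorm_mult[of "adj X" X] by simp
  then show ?thesis using opnorm_nonneg[of X]
    by (cases "opnorm X = 0") (auto simp: power2_eq_square opnorm_nonneg)
qed

lemma opnorm_adj: "opnorm (adj X) = opnorm X"
  using opnorm_adj_le[of X] opnorm_adj_le[of "adj X"] by simp

lemma opnorm_AtA: "opnorm (adj X ** X) = (opnorm X)^2"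
  using opnorm_le_AtA[of X] opnorm_mult[of "adj X" X] opnorm_adj[of X]
  by (simp add: power2_eq_square)

lemma smat_mv: "smat c A *v z = c *s (A *v z)"
  by (simp add: smat_def vec_eq_iff matrix_vector_mult_def sum_distrib_left mult_ac)

lemma diff_mv: "(A - B) *v z = A *v z - B *v (z::complex^'n::finite)"
  by (simp add: vec_eq_iff matrix_vector_mult_def sum_subtractf algebra_simps)

lemma adj_herm3: "hermitian A \<Longrightarrow> hermitian B \<Longrightarrow> hermitian C \<Longrightarrow> hermitian D \<Longrightarrow> adj (A ** B ** C ** D) = D ** C ** B ** A"
  by (simp add: adj_mult hermitian_def matrix_mul_assoc)

lemma opnorm_zero_mv: "opnorm X = 0 \<Longrightarrow> X *v v = 0"
  using opnorm_bound[of X v] by simp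

lemma mv_eq_mat: "(\<And>v. X *v v = (0::complex^'n::finite)) \<Longrightarrow> X = 0"
  by (metis matrix_eq matrix_vector_mult_0)

lemma cancel_l: "A ** B = mat 1 \<Longrightarrow> X ** A ** B = X"
  by (metis matrix_mul_assoc matrix_mul_rid)

lemma core:
  fixes \<rho> Xa Xai Yb Ybi Z :: "('n::finite) op" and \<rho>' Xa' Xai' Yb' Ybi' Z' Uz :: "('m::finite) op"
    and dz :: "'m \<Rightarrow> real" and c :: real
  assumes hP: "hermitian (mpow \<rho> (1/2))" and PP: "mpow \<rho> (1/2) ** mpow \<rho> (1/2) = \<rho>" and hr: "hermitian \<rho>"
    and hXa: "hermitian Xa" "hermitian Xai" "Xa ** Xai = mat 1"
    and hYb: "hermitian Yb" "hermitian Ybi" "Yb ** Ybi = mat 1"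
    and hG: "hermitian (mpow Z (-1/2))" "hermitian (mpow Z (1/2))" "mpow Z (-1/2) ** mpow Z (1/2) = mat 1"
      "mpow Z (1/2) ** mpow Z (1/2) = Z" "mpow Z (-1/2) ** mpow Z (-1/2) = mpow Z (-1)" "hermitian Z"
    and hP': "hermitian (mpow \<rho>' (1/2))" and PP': "mpow \<rho>' (1/2) ** mpow \<rho>' (1/2) = \<rho>'"
    and hXa': "hermitian Xa'" "hermitian Xai'" "Xai' ** Xa' = mat 1" "Xa' ** Xai' = mat 1"
    and hYb': "hermitian Yb'" "hermitian Ybi'" "Ybi' ** Yb' = mat 1" "Yb' ** Ybi' = mat 1"
    and dZ': "decomp Z' Uz dz" and nnZ': "\<And>k. dz k \<ge> 0"
    and ch: "\<And>c. c \<ge> 0 \<Longrightarrow> psd (smat (of_real c) (adj (Ybi ** Xai) ** Z ** (Ybi ** Xai)) - \<rho>)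
              \<Longrightarrow> psd (smat (of_real c) (adj (Ybi' ** Xai') ** Z' ** (Ybi' ** Xai')) - \<rho>')"
    and nz: "\<rho>' \<noteq> 0"
  shows "opnorm (mpow \<rho>' (1/2) ** (Xa' ** Yb' ** mpow Z' (-1) ** Yb' ** Xa') ** mpow \<rho>' (1/2))
           \<le> opnorm (mpow \<rho> (1/2) ** (Xa ** Yb ** mpow Z (-1) ** Yb ** Xa) ** mpow \<rho> (1/2))
       \<and> opnorm (mpow \<rho>' (1/2) ** (Xa' ** Yb' ** mpow Z' (-1) ** Yb' ** Xa') ** mpow \<rho>' (1/2)) > 0"
proof -
  define P where "P = mpow \<rho> (1/2)"
  define G where "G = mpow Z (-1/2)"
  define Gi where "Gi = mpow Z (1/2)"
  define X where "X = G ** Yb ** Xa ** P"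
  define B where "B = Ybi ** Xai"
  have adjX: "adj X = P ** Xa ** Yb ** G"
    unfolding X_def P_def G_def by (rule adj_herm3) (use hG hYb hXa hP in auto)
  have PKP: "mpow \<rho> (1/2) ** (Xa ** Yb ** mpow Z (-1) ** Yb ** Xa) ** mpow \<rho> (1/2) = adj X ** X"
    unfolding adjX unfolding X_def P_def G_def hG(5)[symmetric] by (simp add: matrix_mul_assoc)
  define c where "c = (opnorm X)^2"
  have c0: "c \<ge> 0" unfolding c_def by simp
  have cPKP: "opnorm (mpow \<rho> (1/2) ** (Xa ** Yb ** mpow Z (-1) ** Yb ** Xa) ** mpow \<rho> (1/2)) = c"
    unfolding PKP c_def by (rule opnorm_AtA)
  have ineq: "Re (cinner_vec z (\<rho> *v z)) \<le> c * Re (cinner_vec z ((adj B ** Z ** B) *v z))" for z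
  proof -
    define y where "y = Gi *v (B *v z)"
    have "adj X *v y = P *v z"
    proof -
      have "adj X ** Gi ** B = P"
        unfolding adjX B_def
        by (simp add: matrix_mul_assoc cancel_l[OF hG(3)[folded G_def Gi_def]] cancel_l[OF hYb(3)] cancel_l[OF hXa(3)])
      then show ?thesis unfolding y_def by (simp add: matrix_vector_mul_assoc matrix_mul_assoc)
    qed
    then have "norm (P *v z) \<le> opnorm X * norm y"
      using opnorm_bound[of "adj X" y] by (simp add: opnorm_adj)
    then have "(norm (P *v z))^2 \<le> c * (norm y)^2"
      unfolding c_def by (metis norm_ge_zero power_mono power_mult_distrib)
    moreover have "(norm (P *v z))^2 = Re (cinner_vec z (\<rho> *v z))"
      using herm_psd_sq[OF hP, of z] PP unfolding P_def by simp
    moreover have "(norm y)^2 = Re (cinner_vec z ((adj B ** Z ** B) *v z))"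
    proof -
      have "cinner_vec y y = cinner_vec (B *v z) ((Gi ** Gi) *v (B *v z))"
        unfolding y_def by (simp add: matrix_vector_mul_assoc[symmetric] herm_ci[OF hG(2)[folded Gi_def]])
      also have "\<dots> = cinner_vec z ((adj B ** Z ** B) *v z)"
        using hG(4) unfolding Gi_def by (simp add: ci_adj matrix_vector_mul_assoc[symmetric])
      finally show ?thesis by (metis ci_self_Re)
    qed
    ultimately show ?thesis by simp
  qed
  have psd1: "psd (smat (of_real c) (adj B ** Z ** B) - \<rho>)"
    unfolding psd_def
  proof
    fix z
    have i1: "Im (cinner_vec z ((adj B ** Z ** B) *v z)) = 0"
    proof -
      have "cinner_vec z ((adj B ** Z ** B) *v z) = cinner_vec (B *v z) (Z *v (B *v z))"
        by (simp add: ci_adj matrix_vector_mul_assoc[symmetric])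
      then show ?thesis using herm_Im[OF hG(6)] by simp
    qed
    show "Im (cinner_vec z ((smat (complex_of_real c) (adj B ** Z ** B) - \<rho>) *v z)) = 0 \<and>
          0 \<le> Re (cinner_vec z ((smat (complex_of_real c) (adj B ** Z ** B) - \<rho>) *v z))"
      using i1 herm_Im[OF hr, of z] ineq[of z]
      by (simp add: diff_mv smat_mv ci_diff_right ci_scale_right)
  qed
  define B' where "B' = Ybi' ** Xai'"
  have psd2: "psd (smat (of_real c) (adj B' ** Z' ** B') - \<rho>')"
    using ch[OF c0 psd1[unfolded B_def]] unfolding B'_def .
  have ineq': "Re (cinner_vec z (\<rho>' *v z)) \<le> c * Re (cinner_vec (B' *v z) (Z' *v (B' *v z)))" for z
  proof -
    have "Re (cinner_vec z ((smat (of_real c) (adj B' ** Z' ** B') - \<rho>') *v z)) \<ge> 0"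
      using psd2 unfolding psd_def by blast
    moreover have "cinner_vec z ((adj B' ** Z' ** B') *v z) = cinner_vec (B' *v z) (Z' *v (B' *v z))"
      by (simp add: ci_adj matrix_vector_mul_assoc[symmetric])
    ultimately show ?thesis by (simp add: diff_mv smat_mv ci_diff_right ci_scale_right)
  qed
  define P' where "P' = mpow \<rho>' (1/2)"
  define G' where "G' = mpow Z' (-1/2)"
  define H where "H = mpow Z' (1/2)"
  define Q where "Q = mpow Z' 0"
  define X' where "X' = G' ** Yb' ** Xa' ** P'"
  have hG': "hermitian G'" unfolding G'_def by (rule mpow_herm[OF dZ'])
  have hH: "hermitian H" unfolding H_def by (rule mpow_herm[OF dZ'])
  have Z1: "mpow Z' 1 = Z'" by (rule mpow_one[OF dZ' nnZ'])
  have GZG: "G' ** Z' ** G' = Q"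
  proof -
    have "G' ** Z' ** G' = mpow Z' (-1/2) ** mpow Z' 1 ** mpow Z' (-1/2)" unfolding G'_def Z1 ..
    also have "\<dots> = mpow Z' 0" by (simp add: mpow_mult[OF dZ'])
    finally show ?thesis unfolding Q_def .
  qed
  have HH: "H ** H = Z'" unfolding H_def by (simp add: mpow_mult[OF dZ'] Z1)
  have GH: "G' ** H = Q" unfolding G'_def H_def Q_def by (simp add: mpow_mult[OF dZ'])
  have HQ: "H ** Q = H" unfolding H_def Q_def by (simp add: mpow_mult[OF dZ'])
  have adjX': "adj X' = P' ** Xa' ** Yb' ** G'"
    unfolding X'_def P'_def by (rule adj_herm3) (use hG' hYb' hXa' hP' in auto)
  have BXY: "B' ** (Xa' ** Yb') = mat 1"
    unfolding B'_def by (simp add: matrix_mul_assoc cancel_l[OF hXa'(3)] hYb'(3))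
  have XYB: "(Xa' ** Yb') ** B' = mat 1"
    unfolding B'_def by (simp add: matrix_mul_assoc cancel_l[OF hYb'(4)] hXa'(4))
  have bnd: "norm (adj X' *v y) \<le> sqrt c * norm y" for y
  proof -
    define z where "z = (Xa' ** Yb' ** G') *v y"
    have Bz: "B' *v z = G' *v y" unfolding z_def
      by (simp add: matrix_vector_mul_assoc matrix_mul_assoc BXY[unfolded matrix_mul_assoc])
    have "adj X' *v y = P' *v z" unfolding adjX' z_def by (simp add: matrix_vector_mul_assoc matrix_mul_assoc)
    then have "(norm (adj X' *v y))^2 = Re (cinner_vec z (\<rho>' *v z))"
      using herm_psd_sq[OF hP', of z] PP' unfolding P'_def by simp
    also have "\<dots> \<le> c * Re (cinner_vec (G' *v y) (Z' *v (G' *v y)))" using ineq'[of z] Bz by simp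
    also have "cinner_vec (G' *v y) (Z' *v (G' *v y)) = cinner_vec y (Q *v y)"
      unfolding GZG[symmetric] by (simp add: herm_ci[OF hG'] matrix_vector_mul_assoc[symmetric])
    also have "c * Re (cinner_vec y (Q *v y)) \<le> c * (norm y)^2"
      unfolding Q_def by (rule mult_left_mono[OF qf_mpow0[OF dZ'] c0])
    also have "\<dots> = (sqrt c * norm y)^2" using c0 by (simp add: power_mult_distrib)
    finally show ?thesis by (rule power2_le_imp_le) (simp add: c0)
  qed
  have "opnorm (adj X') \<le> sqrt c" by (rule opnorm_le[OF bnd])
  then have nX': "opnorm X' \<le> sqrt c" by (simp add: opnorm_adj)
  have PKP': "mpow \<rho>' (1/2) ** (Xa' ** Yb' ** mpow Z' (-1) ** Yb' ** Xa') ** mpow \<rho>' (1/2) = adj X' ** X'"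
  proof -
    have "mpow Z' (-1) = G' ** G'" unfolding G'_def by (simp add: mpow_mult[OF dZ'])
    then show ?thesis unfolding adjX' unfolding X'_def P'_def by (simp add: matrix_mul_assoc)
  qed
  have le: "opnorm (adj X' ** X') \<le> c"
    unfolding opnorm_AtA using nX' c0
    by (metis opnorm_nonneg power_mono real_sqrt_pow2)
  have pos: "opnorm X' > 0"
  proof (rule ccontr)
    assume "\<not> opnorm X' > 0"
    then have "opnorm (adj X') = 0" using opnorm_nonneg[of X'] by (simp add: opnorm_adj)
    then have A0: "(P' ** Xa' ** Yb' ** G') *v y = 0" for y using opnorm_zero_mv adjX' by metis
    have "P' *v z' = 0" for z'
    proof -
      define w where "w = B' *v z'"
      define z2 where "z2 = (Xa' ** Yb') *v (w - Q *v w)"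
      have zz: "z' = (Xa' ** Yb') *v (Q *v w) + z2"
        unfolding z2_def w_def
        by (simp add: mv_diff matrix_vector_mul_assoc matrix_mul_assoc XYB[unfolded matrix_mul_assoc])
      have t1: "P' *v ((Xa' ** Yb') *v (Q *v w)) = 0"
        using A0[of "H *v w"] unfolding GH[symmetric]
        by (simp add: matrix_vector_mul_assoc matrix_mul_assoc)
      have Bz2: "B' *v z2 = w - Q *v w" unfolding z2_def
        by (simp add: matrix_vector_mul_assoc matrix_mul_assoc BXY[unfolded matrix_mul_assoc])
      have Hz: "H *v (w - Q *v w) = 0"
        by (simp add: mv_diff matrix_vector_mul_assoc HQ)
      have "cinner_vec (B' *v z2) (Z' *v (B' *v z2)) = 0"
        unfolding Bz2 HH[symmetric]
        by (simp add: matrix_vector_mul_assoc[symmetric] herm_ci[OF hH] Hz)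
      then have "Re (cinner_vec z2 (\<rho>' *v z2)) \<le> 0" using ineq'[of z2] by simp
      moreover have "Re (cinner_vec z2 (\<rho>' *v z2)) = (norm (P' *v z2))^2"
        using herm_psd_sq[OF hP', of z2] PP' unfolding P'_def by simp
      ultimately have "P' *v z2 = 0" by simp
      then show ?thesis using t1 zz by (simp add: mv_add)
    qed
    then have "P' = 0" by (rule mv_eq_mat)
    then have "\<rho>' = 0" using PP' unfolding P'_def by simp
    with nz show False ..
  qed
  show ?thesis
    unfolding PKP' cPKP opnorm_AtA using le pos
    by (simp add: opnorm_AtA)
qed

definition embg :: "(('n::finite) \<Rightarrow> ('s::finite)) \<Rightarrow> ('n \<Rightarrow> 'k) \<Rightarrow> 's op \<Rightarrow> 'n op" where
  "embg \<pi> \<kappa> T = (\<chi> p q. if \<kappa> p = \<kappa> q then T $ (\<pi> p) $ (\<pi> q) else 0)"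

definition tens :: "(('n::finite) \<Rightarrow> ('s::finite)) \<Rightarrow> ('n \<Rightarrow> 'k) \<Rightarrow> bool" where
  "tens \<pi> \<kappa> \<longleftrightarrow> (\<forall>k t. \<exists>!s. \<kappa> s = k \<and> \<pi> s = t)"

lemma tens_bij: "tens \<pi> \<kappa> \<Longrightarrow> bij_betw \<pi> {s. \<kappa> s = k} UNIV"
  unfolding tens_def bij_betw_def inj_on_def by (auto simp: image_def) metis

lemma tens_inj: "tens \<pi> \<kappa> \<Longrightarrow> \<kappa> p = \<kappa> q \<Longrightarrow> \<pi> p = \<pi> q \<Longrightarrow> p = q"
  unfolding tens_def by metis

lemma embg_mult:
  assumes t: "tens \<pi> \<kappa>"
  shows "embg \<pi> \<kappa> A ** embg \<pi> \<kappa> B = embg \<pi> \<kappa> (A ** B)"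
proof -
  have "(\<Sum>s\<in>UNIV. (if \<kappa> p = \<kappa> s then A $ \<pi> p $ \<pi> s else 0) * (if \<kappa> s = \<kappa> q then B $ \<pi> s $ \<pi> q else 0))
        = (if \<kappa> p = \<kappa> q then (\<Sum>u\<in>UNIV. A $ \<pi> p $ u * B $ u $ \<pi> q) else 0)" for p q
  proof (cases "\<kappa> p = \<kappa> q")
    case True
    have "(\<Sum>s\<in>UNIV. (if \<kappa> p = \<kappa> s then A $ \<pi> p $ \<pi> s else 0) * (if \<kappa> s = \<kappa> q then B $ \<pi> s $ \<pi> q else 0))
        = (\<Sum>s\<in>UNIV. if \<kappa> s = \<kappa> p then A $ \<pi> p $ \<pi> s * B $ \<pi> s $ \<pi> q else 0)"
      using True by (intro sum.cong) auto
    also have "\<dots> = (\<Sum>s\<in>{s. \<kappa> s = \<kappa> p}. A $ \<pi> p $ \<pi> s * B $ \<pi> s $ \<pi> q)"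
      by (simp add: sum.inter_filter[symmetric])
    also have "\<dots> = (\<Sum>u\<in>UNIV. A $ \<pi> p $ u * B $ u $ \<pi> q)"
      by (rule sum.reindex_bij_betw[OF tens_bij[OF t]])
    finally show ?thesis using True by simp
  next
    case False
    then show ?thesis by (simp, intro sum.neutral) auto
  qed
  then show ?thesis by (simp add: embg_def matrix_matrix_mult_def vec_eq_iff)
qed

lemma embg_adj: "adj (embg \<pi> \<kappa> A) = embg \<pi> \<kappa> (adj A)"
  by (auto simp: embg_def adj_def vec_eq_iff)

lemma embg_mat1: "tens \<pi> \<kappa> \<Longrightarrow> embg \<pi> \<kappa> (mat 1) = mat 1"
  by (auto simp: embg_def mat_def vec_eq_iff dest: tens_inj)

lemma embg_diag: "tens \<pi> \<kappa> \<Longrightarrow> embg \<pi> \<kappa> (diag_op g) = diag_op (\<lambda>p. g (\<pi> p))"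
  by (auto simp: embg_def diag_op_def vec_eq_iff dest: tens_inj)

lemma embg_add: "embg \<pi> \<kappa> (A + B) = embg \<pi> \<kappa> A + embg \<pi> \<kappa> B"
  by (auto simp: embg_def vec_eq_iff)

lemma decomp_embg:
  assumes t: "tens \<pi> \<kappa>" and d: "decomp T U dd"
  shows "decomp (embg \<pi> \<kappa> T) (embg \<pi> \<kappa> U) (\<lambda>p. dd (\<pi> p))"
proof -
  have u: "unitary_op U" and e: "T = U ** diag_op (\<lambda>i. complex_of_real (dd i)) ** adj U"
    using d by (auto simp: decomp_def)
  have "unitary_op (embg \<pi> \<kappa> U)"
    using u unfolding unitary_op_def by (simp add: embg_adj embg_mult[OF t] embg_mat1[OF t])
  moreover have "embg \<pi> \<kappa> T = embg \<pi> \<kappa> U ** diag_op (\<lambda>p. complex_of_real (dd (\<pi> p))) ** adj (embg \<pi> \<kappa> U)"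
    by (subst e) (simp add: embg_adj embg_mult[OF t, symmetric] embg_diag[OF t])
  ultimately show ?thesis by (simp add: decomp_def)
qed

lemma mpow_embg:
  assumes t: "tens \<pi> \<kappa>" and d: "decomp T U dd"
  shows "mpow (embg \<pi> \<kappa> T) s = embg \<pi> \<kappa> (mpow T s)"
  by (simp add: mpow_decomp[OF decomp_embg[OF t d]] mpow_decomp[OF d] embg_adj embg_mult[OF t, symmetric] embg_diag[OF t])

definition embR :: "('r::finite) op \<Rightarrow> (('a::finite) \<times> 'r) op" where
  "embR T = embg snd fst T"

lemma tens_R: "tens (snd :: ('a::finite) \<times> ('r::finite) \<Rightarrow> 'r) fst"
  unfolding tens_def by auto

lemma tens_AC: "tens (\<lambda>p::('a::finite) \<times> ('b::finite) \<times> ('c::finite). (fst p, snd (snd p))) (\<lambda>p. fst (snd p))"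
  unfolding tens_def
proof (intro allI)
  fix k and t :: "'a \<times> 'c"
  show "\<exists>!s::'a \<times> 'b \<times> 'c. fst (snd s) = k \<and> (fst s, snd (snd s)) = t"
    by (rule ex1I[of _ "(fst t, k, snd t)"]) auto
qed

lemma tens_BC: "tens (\<lambda>p::('a::finite) \<times> ('b::finite) \<times> ('c::finite). snd p) (\<lambda>p. fst p)"
  unfolding tens_def by auto

lemma embAC_g: "embAC T = embg (\<lambda>p. (fst p, snd (snd p))) (\<lambda>p. fst (snd p)) T"
  by (simp add: embAC_def embg_def)

lemma embBC_g: "embBC T = embg snd fst T"
  by (simp add: embBC_def embg_def)

lemma embBC_R: "embBC T = embR T"
  by (simp add: embBC_g embR_def)

lemma embC_AC: "embC W = embAC (embR W)"
  by (auto simp: embC_def embAC_def embR_def embg_def vec_eq_iff)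

lemma embC_BC: "embC W = embBC (embR W)"
  by (auto simp: embC_def embBC_def embR_def embg_def vec_eq_iff)

lemmas embAC_mult = embg_mult[OF tens_AC, folded embAC_g]
lemmas embAC_adj = embg_adj[of "\<lambda>p. (fst p, snd (snd p))" "\<lambda>p. fst (snd p)", folded embAC_g]
lemmas decomp_embAC = decomp_embg[OF tens_AC, folded embAC_g]
lemmas mpow_embAC = mpow_embg[OF tens_AC, folded embAC_g]
lemmas embR_mult = embg_mult[OF tens_R, folded embR_def]
lemmas embR_adj = embg_adj[of snd fst, folded embR_def]
lemmas decomp_embR = decomp_embg[OF tens_R, folded embR_def]
lemmas mpow_embR = mpow_embg[OF tens_R, folded embR_def]
lemmas embBC_mult = embg_mult[OF tens_BC, folded embBC_g]
lemmas embBC_adj = embg_adj[of snd fst, folded embBC_g]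
lemmas decomp_embBC = decomp_embg[OF tens_BC, folded embBC_g]
lemmas mpow_embBC = mpow_embg[OF tens_BC, folded embBC_g]

lemma sum_pair2: "(\<Sum>p\<in>(UNIV::(('a::finite) \<times> ('r::finite)) set). f p) = (\<Sum>r\<in>UNIV. \<Sum>a\<in>UNIV. f (a, r))"
proof -
  have "(\<Sum>p\<in>(UNIV::('a \<times> 'r) set). f p) = (\<Sum>p\<in>(UNIV::'a set) \<times> (UNIV::'r set). f p)"
    by (simp only: UNIV_Times_UNIV)
  also have "\<dots> = (\<Sum>a\<in>UNIV. \<Sum>r\<in>UNIV. f (a, r))" by (rule sum.cartesian_product')
  also have "\<dots> = (\<Sum>r\<in>UNIV. \<Sum>a\<in>UNIV. f (a, r))" by (rule sum.swap)
  finally show ?thesis .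
qed

definition bigm :: "(('r::finite) \<Rightarrow> 'r \<Rightarrow> ('a::finite) op) \<Rightarrow> ('a \<times> 'r) op" where
  "bigm M = (\<chi> p q. M (snd p) (snd q) $ fst p $ fst q)"

definition bigv :: "(('r::finite) \<Rightarrow> complex^('a::finite)) \<Rightarrow> complex^('a \<times> 'r)" where
  "bigv u = (\<chi> p. u (snd p) $ fst p)"

lemma mv_big: "(bigm M *v bigv u) $ (a, r) = (\<Sum>r'\<in>UNIV. \<Sum>a'\<in>UNIV. M r r' $ a $ a' * u r' $ a')"
  unfolding matrix_vector_mult_def vec_lambda_beta sum_pair2 by (simp add: bigm_def bigv_def)

lemma ci_big: "cinner_vec (bigv u) z = (\<Sum>r\<in>UNIV. \<Sum>a\<in>UNIV. cnj (u r $ a) * z $ (a, r))"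
  unfolding cinner_vec_def sum_pair2 by (simp add: bigv_def)

lemma block_ident:
  fixes u :: "('r::finite) \<Rightarrow> complex^('a::finite)" and M :: "'r \<Rightarrow> 'r \<Rightarrow> 'a op"
  shows "(\<Sum>r\<in>UNIV. \<Sum>r'\<in>UNIV. cinner_vec (u r) (M r r' *v u r')) = cinner_vec (bigv u) (bigm M *v bigv u)"
proof -
  have "(\<Sum>r\<in>UNIV. \<Sum>r'\<in>UNIV. cinner_vec (u r) (M r r' *v u r'))
      = (\<Sum>r\<in>UNIV. \<Sum>r'\<in>UNIV. \<Sum>a\<in>UNIV. cnj (u r $ a) * (\<Sum>a'\<in>UNIV. M r r' $ a $ a' * u r' $ a'))"
    unfolding cinner_vec_def matrix_vector_mult_def vec_lambda_beta ..
  also have "\<dots> = (\<Sum>r\<in>UNIV. \<Sum>a\<in>UNIV. \<Sum>r'\<in>UNIV. cnj (u r $ a) * (\<Sum>a'\<in>UNIV. M r r' $ a $ a' * u r' $ a'))"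
    by (rule sum.cong[OF refl], rule sum.swap)
  also have "\<dots> = (\<Sum>r\<in>UNIV. \<Sum>a\<in>UNIV. cnj (u r $ a) * (\<Sum>r'\<in>UNIV. \<Sum>a'\<in>UNIV. M r r' $ a $ a' * u r' $ a'))"
    by (simp add: sum_distrib_left)
  also have "\<dots> = cinner_vec (bigv u) (bigm M *v bigv u)"
    by (simp only: ci_big mv_big)
  finally show ?thesis .
qed

lemma ch_zero: "quantum_channel \<Phi> \<Longrightarrow> \<Phi> 0 = 0"
proof -
  assume "quantum_channel \<Phi>"
  then have "\<forall>X Y. \<Phi> (X + Y) = \<Phi> X + \<Phi> Y" by (simp add: quantum_channel_def)
  then have "\<Phi> (0 + 0) = \<Phi> 0 + \<Phi> 0" by blast
  then show ?thesis by simp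
qed

lemma ch_sum:
  assumes ch: "quantum_channel \<Phi>" and fin: "finite K"
  shows "\<Phi> (\<Sum>k\<in>K. f k) = (\<Sum>k\<in>K. \<Phi> (f k))"
  using fin
proof (induction K rule: finite_induct)
  case empty then show ?case by (simp add: ch_zero[OF ch])
next
  case (insert x F) then show ?case using ch by (simp add: quantum_channel_def)
qed

lemma sum2_delta: "(\<Sum>x\<in>(UNIV::('a::finite) set). \<Sum>y\<in>(UNIV::('b::finite) set). if i = x \<and> j = y then f x y else (0::complex)) = f i j"
proof -
  have "(\<Sum>x\<in>(UNIV::'a set). \<Sum>y\<in>(UNIV::'b set). if i = x \<and> j = y then f x y else (0::complex))
     = (\<Sum>x\<in>(UNIV::'a set). if i = x then (\<Sum>y\<in>(UNIV::'b set). if j = y then f x y else 0) else 0)"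
    by (intro sum.cong refl) auto
  then show ?thesis by simp
qed

lemma ch_smat: "quantum_channel \<Phi> \<Longrightarrow> \<Phi> (smat c X) = smat c (\<Phi> X)"
  by (simp add: quantum_channel_def)

lemma mat_expand: "(M :: ('a::finite) op) = (\<Sum>a\<in>UNIV. \<Sum>a'\<in>UNIV. smat (M $ a $ a') (munit a a'))"
proof -
  have "(\<Sum>a\<in>UNIV. \<Sum>a'\<in>UNIV. smat (M $ a $ a') (munit a a')) $ i $ j = M $ i $ j" for i j
    by (simp add: sum_component smat_def munit_def if_distrib[of "\<lambda>y. _ * y"] sum2_delta cong: if_cong)
  then show ?thesis by (simp add: vec_eq_iff)
qed

lemma ch_expand:
  assumes "quantum_channel \<Phi>"
  shows "\<Phi> M $ i $ j = (\<Sum>a\<in>UNIV. \<Sum>a'\<in>UNIV. M $ a $ a' * \<Phi> (munit a a') $ i $ j)"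
proof -
  have "\<Phi> M = (\<Sum>a\<in>UNIV. \<Sum>a'\<in>UNIV. smat (M $ a $ a') (\<Phi> (munit a a')))"
    by (subst mat_expand) (simp add: ch_sum[OF assms] ch_smat[OF assms])
  then show ?thesis by (simp add: sum_component smat_def)
qed

lemma psd_ext_first:
  fixes \<Phi> :: "('a::finite) op \<Rightarrow> ('a2::finite) op" and X :: "('a \<times> ('r::finite)) op"
  assumes ch: "quantum_channel \<Phi>" and p: "psd X"
  shows "psd (ext_first \<Phi> X)"
proof -
  define n where "n = CARD('r)"
  obtain h where h: "bij_betw h {0..<n} (UNIV::'r set)"
    using ex_bij_betw_nat_finite[of "UNIV::'r set"] unfolding n_def by auto
  then have h': "bij_betw h {..<n} (UNIV::'r set)" by (simp add: atLeast0LessThan)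
  define g where "g = inv_into {..<n} h"
  have gh: "g (h i) = i" if "i < n" for i
    using that h' unfolding g_def bij_betw_def by (simp add: inv_into_f_f)
  have reidx: "(\<Sum>i<n. \<Sum>j<n. F (h i) (h j)) = (\<Sum>r\<in>UNIV. \<Sum>r'\<in>UNIV. F r r')" for F :: "'r \<Rightarrow> 'r \<Rightarrow> complex"
  proof -
    have "(\<Sum>i<n. \<Sum>j<n. F (h i) (h j)) = (\<Sum>i<n. \<Sum>r'\<in>UNIV. F (h i) r')"
      by (rule sum.cong[OF refl]) (rule sum.reindex_bij_betw[OF h'])
    also have "\<dots> = (\<Sum>r\<in>UNIV. \<Sum>r'\<in>UNIV. F r r')"
      by (rule sum.reindex_bij_betw[OF h', of "\<lambda>r. \<Sum>r'\<in>UNIV. F r r'"])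
    finally show ?thesis .
  qed
  define Mx where "Mx = (\<lambda>r r'. (\<chi> a a'. X $ (a, r) $ (a', r')) :: 'a op)"
  define Xb where "Xb = (\<lambda>i j. Mx (h i) (h j))"
  have blk: "psd_block n Xb"
    unfolding psd_block_def
  proof
    fix v :: "nat \<Rightarrow> complex^'a"
    have "(\<Sum>i<n. \<Sum>j<n. cinner_vec (v i) (Xb i j *v v j))
        = (\<Sum>i<n. \<Sum>j<n. cinner_vec (v (g (h i))) (Mx (h i) (h j) *v v (g (h j))))"
      unfolding Xb_def by (intro sum.cong refl) (simp add: gh)
    also have "\<dots> = (\<Sum>r\<in>UNIV. \<Sum>r'\<in>UNIV. cinner_vec (v (g r)) (Mx r r' *v v (g r')))"
      by (rule reidx)
    also have "\<dots> = cinner_vec (bigv (\<lambda>r. v (g r))) (X *v bigv (\<lambda>r. v (g r)))"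
    proof -
      have "bigm Mx = X" by (simp add: bigm_def Mx_def vec_eq_iff)
      then show ?thesis using block_ident[of "\<lambda>r. v (g r)" Mx] by simp
    qed
    finally show "Im (\<Sum>i<n. \<Sum>j<n. cinner_vec (v i) (Xb i j *v v j)) = 0 \<and>
          0 \<le> Re (\<Sum>i<n. \<Sum>j<n. cinner_vec (v i) (Xb i j *v v j))"
      using p unfolding psd_def by simp
  qed
  have "\<forall>n X. psd_block n X \<longrightarrow> psd_block n (\<lambda>i j. \<Phi> (X i j))" using ch by (simp add: quantum_channel_def)
  then have blk2: "psd_block n (\<lambda>i j. \<Phi> (Xb i j))" using blk by blast
  show ?thesis unfolding psd_def
  proof
    fix x :: "complex^('a2 \<times> 'r)"
    define vx where "vx = (\<lambda>i. (\<chi> a2. x $ (a2, h i)) :: complex^'a2)"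
    have "(\<Sum>i<n. \<Sum>j<n. cinner_vec (vx i) (\<Phi> (Xb i j) *v vx j))
        = (\<Sum>r\<in>UNIV. \<Sum>r'\<in>UNIV. cinner_vec (\<chi> a2. x $ (a2, r)) (\<Phi> (Mx r r') *v (\<chi> a2. x $ (a2, r'))))"
      unfolding vx_def Xb_def by (rule reidx)
    also have "\<dots> = cinner_vec (bigv (\<lambda>r. \<chi> a2. x $ (a2, r))) (bigm (\<lambda>r r'. \<Phi> (Mx r r')) *v bigv (\<lambda>r. \<chi> a2. x $ (a2, r)))"
      by (rule block_ident)
    also have "bigv (\<lambda>r. \<chi> a2. x $ (a2, r)) = x" by (simp add: bigv_def vec_eq_iff)
    also have "bigm (\<lambda>r r'. \<Phi> (Mx r r')) = ext_first \<Phi> X"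
    proof -
      have "bigm (\<lambda>r r'. \<Phi> (Mx r r')) $ p $ q = ext_first \<Phi> X $ p $ q" for p q
        unfolding bigm_def ext_first_def vec_lambda_beta ch_expand[OF ch, of "Mx (snd p) (snd q)"]
        unfolding Mx_def vec_lambda_beta ..
      then show ?thesis by (simp add: vec_eq_iff)
    qed
    finally have eq: "(\<Sum>i<n. \<Sum>j<n. cinner_vec (vx i) (\<Phi> (Xb i j) *v vx j)) = cinner_vec x (ext_first \<Phi> X *v x)" .
    have "Im (\<Sum>i<n. \<Sum>j<n. cinner_vec (vx i) (\<Phi> (Xb i j) *v vx j)) = 0 \<and>
          0 \<le> Re (\<Sum>i<n. \<Sum>j<n. cinner_vec (vx i) (\<Phi> (Xb i j) *v vx j))"
      using blk2[unfolded psd_block_def, rule_format, of vx] .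
    then show "Im (cinner_vec x (ext_first \<Phi> X *v x)) = 0 \<and> 0 \<le> Re (cinner_vec x (ext_first \<Phi> X *v x))"
      unfolding eq .
  qed
qed

lemma mtrace_munit: "mtrace (munit a a' :: ('a::finite) op) = (if a = a' then 1 else 0)"
proof (cases "a = a'")
  case True then show ?thesis by (simp add: mtrace_def munit_def)
next
  case False then show ?thesis by (simp add: mtrace_def munit_def, intro sum.neutral) auto
qed

lemma trace_ext_first:
  fixes \<Phi> :: "('a::finite) op \<Rightarrow> ('a2::finite) op" and X :: "('a \<times> ('r::finite)) op"
  assumes ch: "quantum_channel \<Phi>"
  shows "mtrace (ext_first \<Phi> X) = mtrace X"
proof -
  have tr: "mtrace (\<Phi> (munit a a')) = (if a = a' then 1 else 0)" for a a'
  proof -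
    have "mtrace (\<Phi> X) = mtrace X" for X using ch by (simp add: quantum_channel_def)
    then show ?thesis by (simp add: mtrace_munit)
  qed
  have "mtrace (ext_first \<Phi> X) = (\<Sum>r\<in>UNIV. \<Sum>b\<in>UNIV. \<Sum>a\<in>UNIV. \<Sum>a'\<in>UNIV. X $ (a, r) $ (a', r) * \<Phi> (munit a a') $ b $ b)"
    unfolding mtrace_def sum_pair2 by (simp add: ext_first_def)
  also have "\<dots> = (\<Sum>r\<in>UNIV. \<Sum>a\<in>UNIV. \<Sum>a'\<in>UNIV. X $ (a, r) $ (a', r) * mtrace (\<Phi> (munit a a')))"
    unfolding mtrace_def
  proof (rule sum.cong[OF refl])
    fix r
    have "(\<Sum>b\<in>UNIV. \<Sum>a\<in>UNIV. \<Sum>a'\<in>UNIV. X $ (a, r) $ (a', r) * \<Phi> (munit a a') $ b $ b)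
        = (\<Sum>a\<in>UNIV. \<Sum>b\<in>UNIV. \<Sum>a'\<in>UNIV. X $ (a, r) $ (a', r) * \<Phi> (munit a a') $ b $ b)"
      by (rule sum.swap)
    also have "\<dots> = (\<Sum>a\<in>UNIV. \<Sum>a'\<in>UNIV. \<Sum>b\<in>UNIV. X $ (a, r) $ (a', r) * \<Phi> (munit a a') $ b $ b)"
      by (rule sum.cong[OF refl], rule sum.swap)
    also have "\<dots> = (\<Sum>a\<in>UNIV. \<Sum>a'\<in>UNIV. X $ (a, r) $ (a', r) * (\<Sum>b\<in>UNIV. \<Phi> (munit a a') $ b $ b))"
      by (simp add: sum_distrib_left)
    finally show "(\<Sum>b\<in>UNIV. \<Sum>a\<in>UNIV. \<Sum>a'\<in>UNIV. X $ (a, r) $ (a', r) * \<Phi> (munit a a') $ b $ b)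
        = (\<Sum>a\<in>UNIV. \<Sum>a'\<in>UNIV. X $ (a, r) $ (a', r) * (\<Sum>b\<in>UNIV. \<Phi> (munit a a') $ b $ b))" .
  qed
  also have "\<dots> = mtrace X"
    unfolding tr unfolding mtrace_def sum_pair2
    by (simp add: if_distrib[of "\<lambda>y. _ * y"] cong: if_cong)
  finally show ?thesis .
qed

lemma polar_herm:
  fixes A :: "('n::finite) op"
  assumes im: "\<And>x. Im (cinner_vec x (A *v x)) = 0"
  shows "hermitian A"
proof -
  define B where "B = A - adj A"
  have q0: "cinner_vec x (B *v x) = 0" for x
  proof -
    have "cinner_vec x (adj A *v x) = cnj (cinner_vec x (A *v x))"
      by (simp add: ci_adj ci_cnj)
    then show ?thesis using im[of x] unfolding B_def
      by (simp add: diff_mv ci_diff_right complex_eq_iff)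
  qed
  have pol: "cinner_vec x (B *v y) = 0" for x y
  proof -
    have e1: "cinner_vec x (B *v y) + cinner_vec y (B *v x) = 0"
      using q0[of "x + y"] q0[of x] q0[of y] by (simp add: mv_add ci_add_left ci_add_right ac_simps)
    have e2: "\<i> * cinner_vec x (B *v y) - \<i> * cinner_vec y (B *v x) = 0"
      using q0[of "x + \<i> *s y"] q0[of x] q0[of y]
      by (simp add: mv_add mv_scale ci_add_left ci_add_right ci_scale_left ci_scale_right algebra_simps)
    from e1 e2 show ?thesis by (simp add: algebra_simps)
  qed
  have "B *v y = 0" for y using pol[of "B *v y" y] by (simp add: ci_eq_zero_iff)
  then have "B = 0" by (rule mv_eq_mat)
  then show ?thesis unfolding B_def hermitian_def by simp
qed

lemma psd_herm: "psd A \<Longrightarrow> hermitian A"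
  by (rule polar_herm) (simp add: psd_def)

lemma embR_mult_left: "(embR A ** Y) $ p $ q = (\<Sum>t\<in>UNIV. A $ (snd p) $ t * Y $ (fst p, t) $ q)"
proof -
  have "(embR A ** Y) $ p $ q = (\<Sum>s\<in>UNIV. embR A $ p $ s * Y $ s $ q)"
    by (simp add: matrix_matrix_mult_def)
  also have "\<dots> = (\<Sum>t\<in>UNIV. \<Sum>b\<in>UNIV. embR A $ p $ (b, t) * Y $ (b, t) $ q)"
    by (rule sum_pair2)
  also have "\<dots> = (\<Sum>t\<in>UNIV. \<Sum>b\<in>UNIV. (if fst p = b then A $ (snd p) $ t else 0) * Y $ (b, t) $ q)"
    by (simp add: embR_def embg_def prod.sel cong: if_cong)
  also have "\<dots> = (\<Sum>t\<in>UNIV. A $ (snd p) $ t * Y $ (fst p, t) $ q)"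
    by (rule sum.cong[OF refl]) (simp add: if_distrib[of "\<lambda>y. y * _"] cong: if_cong)
  finally show ?thesis .
qed

lemma embR_mult_right: "(Y ** embR A) $ p $ q = (\<Sum>t\<in>UNIV. Y $ p $ (fst q, t) * A $ t $ (snd q))"
proof -
  have "(Y ** embR A) $ p $ q = (\<Sum>s\<in>UNIV. Y $ p $ s * embR A $ s $ q)"
    by (simp add: matrix_matrix_mult_def)
  also have "\<dots> = (\<Sum>t\<in>UNIV. \<Sum>b\<in>UNIV. Y $ p $ (b, t) * embR A $ (b, t) $ q)"
    by (rule sum_pair2)
  also have "\<dots> = (\<Sum>t\<in>UNIV. \<Sum>b\<in>UNIV. Y $ p $ (b, t) * (if b = fst q then A $ t $ (snd q) else 0))"
    by (simp add: embR_def embg_def prod.sel cong: if_cong)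
  also have "\<dots> = (\<Sum>t\<in>UNIV. Y $ p $ (fst q, t) * A $ t $ (snd q))"
    by (rule sum.cong[OF refl]) (simp add: if_distrib[of "\<lambda>y. _ * y"] cong: if_cong)
  finally show ?thesis .
qed

lemma ext_first_left:
  fixes \<Phi> :: "('a::finite) op \<Rightarrow> ('a2::finite) op" and Y :: "('a \<times> ('r::finite)) op"
  shows "ext_first \<Phi> (embR A ** Y) = embR A ** ext_first \<Phi> Y"
proof -
  have "ext_first \<Phi> (embR A ** Y) $ p $ q = (embR A ** ext_first \<Phi> Y) $ p $ q" for p q
  proof -
    have "ext_first \<Phi> (embR A ** Y) $ p $ q
        = (\<Sum>a\<in>UNIV. \<Sum>a'\<in>UNIV. \<Sum>t\<in>UNIV. A $ snd p $ t * Y $ (a, t) $ (a', snd q) * \<Phi> (munit a a') $ fst p $ fst q)"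
      unfolding ext_first_def vec_lambda_beta embR_mult_left by (simp add: sum_distrib_right)
    also have "\<dots> = (\<Sum>a\<in>UNIV. \<Sum>t\<in>UNIV. \<Sum>a'\<in>UNIV. A $ snd p $ t * Y $ (a, t) $ (a', snd q) * \<Phi> (munit a a') $ fst p $ fst q)"
      by (rule sum.cong[OF refl], rule sum.swap)
    also have "\<dots> = (\<Sum>t\<in>UNIV. \<Sum>a\<in>UNIV. \<Sum>a'\<in>UNIV. A $ snd p $ t * Y $ (a, t) $ (a', snd q) * \<Phi> (munit a a') $ fst p $ fst q)"
      by (rule sum.swap)
    also have "\<dots> = (embR A ** ext_first \<Phi> Y) $ p $ q"
      unfolding embR_mult_left ext_first_def vec_lambda_beta by (simp add: sum_distrib_left mult_ac)
    finally show ?thesis .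
  qed
  then show ?thesis by (simp add: vec_eq_iff)
qed

lemma ext_first_right:
  fixes \<Phi> :: "('a::finite) op \<Rightarrow> ('a2::finite) op" and Y :: "('a \<times> ('r::finite)) op"
  shows "ext_first \<Phi> (Y ** embR A) = ext_first \<Phi> Y ** embR A"
proof -
  have "ext_first \<Phi> (Y ** embR A) $ p $ q = (ext_first \<Phi> Y ** embR A) $ p $ q" for p q
  proof -
    have "ext_first \<Phi> (Y ** embR A) $ p $ q
        = (\<Sum>a\<in>UNIV. \<Sum>a'\<in>UNIV. \<Sum>t\<in>UNIV. Y $ (a, snd p) $ (a', t) * A $ t $ snd q * \<Phi> (munit a a') $ fst p $ fst q)"
      unfolding ext_first_def vec_lambda_beta embR_mult_right by (simp add: sum_distrib_right)
    also have "\<dots> = (\<Sum>a\<in>UNIV. \<Sum>t\<in>UNIV. \<Sum>a'\<in>UNIV. Y $ (a, snd p) $ (a', t) * A $ t $ snd q * \<Phi> (munit a a') $ fst p $ fst q)"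
      by (rule sum.cong[OF refl], rule sum.swap)
    also have "\<dots> = (\<Sum>t\<in>UNIV. \<Sum>a\<in>UNIV. \<Sum>a'\<in>UNIV. Y $ (a, snd p) $ (a', t) * A $ t $ snd q * \<Phi> (munit a a') $ fst p $ fst q)"
      by (rule sum.swap)
    also have "\<dots> = (ext_first \<Phi> Y ** embR A) $ p $ q"
      unfolding embR_mult_right ext_first_def vec_lambda_beta by (simp add: sum_distrib_left sum_distrib_right mult_ac)
    finally show ?thesis .
  qed
  then show ?thesis by (simp add: vec_eq_iff)
qed

lemma ext_first_lin: "ext_first \<Phi> (smat c A - B) = smat c (ext_first \<Phi> A) - ext_first \<Phi> B"
  unfolding vec_eq_iff ext_first_def smat_def vec_lambda_beta
  by (simp add: algebra_simps sum_subtractf sum_distrib_left)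

definition pm :: "(('m::finite) \<Rightarrow> ('n::finite)) \<Rightarrow> 'n op \<Rightarrow> 'm op" where
  "pm \<sigma> X = (\<chi> p q. X $ (\<sigma> p) $ (\<sigma> q))"

lemma pm_mult: "bij \<sigma> \<Longrightarrow> pm \<sigma> (X ** Y) = pm \<sigma> X ** pm \<sigma> Y"
proof -
  assume b: "bij \<sigma>"
  have "(\<Sum>s\<in>UNIV. X $ \<sigma> p $ \<sigma> s * Y $ \<sigma> s $ \<sigma> q) = (\<Sum>t\<in>UNIV. X $ \<sigma> p $ t * Y $ t $ \<sigma> q)" for p q
    by (rule sum.reindex_bij_betw[OF b])
  then show ?thesis by (simp add: pm_def matrix_matrix_mult_def vec_eq_iff)
qed

lemma pm_lin: "pm \<sigma> (smat c A - B) = smat c (pm \<sigma> A) - pm \<sigma> B"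
  by (simp add: pm_def smat_def vec_eq_iff)

lemma pm_psd:
  fixes \<sigma> :: "('m::finite) \<Rightarrow> ('n::finite)" and X :: "'n op"
  assumes b: "bij \<sigma>" and p: "psd X"
  shows "psd (pm \<sigma> X)"
  unfolding psd_def
proof
  fix x :: "complex^'m"
  define y :: "complex^'n" where "y = (\<chi> t. x $ (inv \<sigma> t))"
  have xy: "x $ p = y $ \<sigma> p" for p unfolding y_def using b by (simp add: bij_is_inj)
  have "cinner_vec x (pm \<sigma> X *v x) = (\<Sum>p\<in>UNIV. cnj (y $ \<sigma> p) * (\<Sum>q\<in>UNIV. X $ \<sigma> p $ \<sigma> q * y $ \<sigma> q))"
    by (simp add: cinner_vec_def matrix_vector_mult_def pm_def xy)
  also have "\<dots> = (\<Sum>p\<in>UNIV. cnj (y $ \<sigma> p) * (\<Sum>u\<in>UNIV. X $ \<sigma> p $ u * y $ u))"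
    by (rule sum.cong[OF refl]) (simp add: sum.reindex_bij_betw[OF b, of "\<lambda>u. X $ _ $ u * y $ u"])
  also have "\<dots> = cinner_vec y (X *v y)"
    unfolding cinner_vec_def matrix_vector_mult_def vec_lambda_beta
    by (rule sum.reindex_bij_betw[OF b, of "\<lambda>t. cnj (y $ t) * (\<Sum>u\<in>UNIV. X $ t $ u * y $ u)"])
  finally show "Im (cinner_vec x (pm \<sigma> X *v x)) = 0 \<and> 0 \<le> Re (cinner_vec x (pm \<sigma> X *v x))"
    using p unfolding psd_def by simp
qed

lemma pm_trace: "bij \<sigma> \<Longrightarrow> mtrace (pm \<sigma> X) = mtrace X"
  unfolding mtrace_def pm_def vec_lambda_beta by (rule sum.reindex_bij_betw)

definition s1 :: "('b \<times> ('a \<times> 'c)) \<Rightarrow> ('a \<times> 'b \<times> 'c)" where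
  "s1 x = (fst (snd x), fst x, snd (snd x))"
definition s2 :: "('a \<times> 'b \<times> 'c) \<Rightarrow> ('b \<times> ('a \<times> 'c))" where
  "s2 p = (fst (snd p), (fst p, snd (snd p)))"

lemma bij_s1: "bij s1"
  by (rule o_bij[of s2]) (auto simp: s1_def s2_def fun_eq_iff)
lemma bij_s2: "bij s2"
  by (rule o_bij[of s1]) (auto simp: s1_def s2_def fun_eq_iff)

lemma ext_mid_pm: "ext_mid \<Phi> X = pm s2 (ext_first \<Phi> (pm s1 X))"
  by (simp add: ext_mid_def ext_first_def pm_def s1_def s2_def vec_eq_iff)

lemma pm_s1_embAC: "pm s1 (embAC A) = embR A"
  by (auto simp: pm_def s1_def embAC_def embR_def embg_def vec_eq_iff)

lemma pm_s2_embR: "pm s2 (embR A) = embAC A"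
  by (auto simp: pm_def s2_def embAC_def embR_def embg_def vec_eq_iff)

lemma pm_s2_s1: "pm s2 (pm s1 X) = X"
  by (simp add: pm_def s1_def s2_def vec_eq_iff)

lemma psd_ext_mid: "quantum_channel \<Phi> \<Longrightarrow> psd X \<Longrightarrow> psd (ext_mid \<Phi> X)"
  unfolding ext_mid_pm by (intro pm_psd bij_s1 bij_s2 psd_ext_first)

lemma trace_ext_mid: "quantum_channel \<Phi> \<Longrightarrow> mtrace (ext_mid \<Phi> X) = mtrace X"
  unfolding ext_mid_pm by (simp add: pm_trace bij_s1 bij_s2 trace_ext_first)

lemma ext_mid_lin: "ext_mid \<Phi> (smat c A - B) = smat c (ext_mid \<Phi> A) - ext_mid \<Phi> B"
  unfolding ext_mid_pm by (simp add: pm_lin ext_first_lin)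

lemma ext_mid_conj: "ext_mid \<Phi> (embAC A ** Y ** embAC B) = embAC A ** ext_mid \<Phi> Y ** embAC B"
  unfolding ext_mid_pm
  by (simp add: pm_mult bij_s1 bij_s2 pm_s1_embAC ext_first_left ext_first_right pm_s2_embR)

lemma ext_first_conj: "ext_first \<Phi> (embBC A ** Y ** embBC B) = embBC A ** ext_first \<Phi> Y ** embBC B"
  unfolding embBC_R by (simp add: ext_first_left ext_first_right)

lemma ext_mid_embBC: "ext_mid \<Phi> (embBC T) = embBC (ext_first \<Phi> T)"
  by (simp add: ext_mid_def ext_first_def embBC_def vec_eq_iff if_distrib[of "\<lambda>y. y * _"] cong: if_cong)

lemma ext_first_embAC: "ext_first \<Phi> (embAC T) = embAC (ext_first \<Phi> T)"
  by (simp add: ext_first_def embAC_def vec_eq_iff if_distrib[of "\<lambda>y. y * _"] cong: if_cong)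

lemma pd_decomp: "posdef A \<Longrightarrow> \<exists>U d. decomp A U d \<and> (\<forall>k. d k > 0)"
proof -
  assume p: "posdef A"
  then have "hermitian A" by (simp add: posdef_def)
  then obtain U d where "decomp A U d" using spectral by blast
  then show ?thesis using decomp_posdef[OF _ p] by blast
qed

lemma psd_decomp: "psd A \<Longrightarrow> \<exists>U d. decomp A U d \<and> (\<forall>k. d k \<ge> 0)"
proof -
  assume p: "psd A"
  then have "hermitian A" by (rule psd_herm)
  then obtain U d where "decomp A U d" using spectral by blast
  then show ?thesis using decomp_psd[OF _ p] by blast
qed

lemma pd_inv: "decomp A U d \<Longrightarrow> (\<forall>k. d k > 0) \<Longrightarrow> s + t = 0 \<Longrightarrow> mpow A s ** mpow A t = mat 1"
  by (simp add: mpow_mult mpow_zero_pd)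

lemma nn_sq: "decomp A U d \<Longrightarrow> (\<forall>k. d k \<ge> 0) \<Longrightarrow> mpow A (1/2) ** mpow A (1/2) = A"
proof -
  assume dA: "decomp A U d" and nn: "\<forall>k. d k \<ge> 0"
  have "mpow A (1/2) ** mpow A (1/2) = mpow A 1" using mpow_mult[OF dA, of "1/2" "1/2"] by simp
  also have "\<dots> = A" using mpow_one[OF dA] nn by blast
  finally show ?thesis .
qed

lemma ln_mono_pos: "0 < x \<Longrightarrow> x \<le> y \<Longrightarrow> ln x \<le> ln (y::real)"
  by simp

lemma embBC_adj': "adj (embBC A) = embBC (adj A)"
  by (simp add: embBC_g embg_adj)

lemma embAC_adj': "adj (embAC A) = embAC (adj A)"
  by (simp add: embAC_g embg_adj)

lemma main_mid:
  fixes \<rho> :: "('a::finite \<times> 'b::finite \<times> 'c::finite) op"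
    and A1 A2 :: "('a \<times> 'c) op" and \<theta> :: "('b \<times> 'c) op"
    and M :: "'b op \<Rightarrow> ('b2::finite) op" and a b :: real
  assumes pr: "posdef \<rho>" and dr: "density \<rho>" and p1: "\<exists>U d. decomp A1 U d \<and> (\<forall>k. d k > 0)" and p2: "\<exists>U d. decomp A2 U d \<and> (\<forall>k. d k > 0)"
    and pt: "posdef \<theta>" and ch: "quantum_channel M"
  shows "ln (opnorm (mpow (ext_mid M \<rho>) (1/2) ** (mpow (embAC A1) a ** mpow (embAC A2) b ** mpow (embBC (ext_first M \<theta>)) (- 1)
            ** mpow (embAC A2) b ** mpow (embAC A1) a) ** mpow (ext_mid M \<rho>) (1/2)))
       \<le> ln (opnorm (mpow \<rho> (1/2) ** (mpow (embAC A1) a ** mpow (embAC A2) b ** mpow (embBC \<theta>) (- 1)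
            ** mpow (embAC A2) b ** mpow (embAC A1) a) ** mpow \<rho> (1/2)))"
proof -
  obtain Ur dr where dR: "decomp \<rho> Ur dr" "\<forall>k. dr k > 0" using pd_decomp[OF pr] by blast
  obtain U1 d1 where d1: "decomp A1 U1 d1" "\<forall>k. d1 k > 0" using p1 by blast
  obtain U2 d2 where d2: "decomp A2 U2 d2" "\<forall>k. d2 k > 0" using p2 by blast
  obtain Uh dh where dH: "decomp \<theta> Uh dh" "\<forall>k. dh k > 0" using pd_decomp[OF pt] by blast
  define \<rho>' where "\<rho>' = ext_mid M \<rho>"
  define \<theta>' where "\<theta>' = ext_first M \<theta>"
  have psr': "psd \<rho>'" unfolding \<rho>'_def by (rule psd_ext_mid[OF ch posdef_psd[OF pr]])
  obtain Ur' dr' where dR': "decomp \<rho>' Ur' dr'" "\<forall>k. dr' k \<ge> 0" using psd_decomp[OF psr'] by blast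
  have pst': "psd \<theta>'" unfolding \<theta>'_def by (rule psd_ext_first[OF ch posdef_psd[OF pt]])
  obtain Uq dq where dQ: "decomp \<theta>' Uq dq" "\<forall>k. dq k \<ge> 0" using psd_decomp[OF pst'] by blast
  have nz: "\<rho>' \<noteq> 0"
  proof
    assume "\<rho>' = 0"
    then have "mtrace \<rho>' = 0" by (simp add: mtrace_def)
    moreover have "mtrace \<rho>' = 1" unfolding \<rho>'_def trace_ext_mid[OF ch] using dr by (simp add: density_def)
    ultimately show False by simp
  qed
  have e1: "decomp (embAC A1 :: ('a \<times> 'b \<times> 'c) op) (embAC U1) (\<lambda>p. d1 (fst p, snd (snd p)))" by (rule decomp_embAC[OF d1(1)])
  have e2: "decomp (embAC A2 :: ('a \<times> 'b \<times> 'c) op) (embAC U2) (\<lambda>p. d2 (fst p, snd (snd p)))" by (rule decomp_embAC[OF d2(1)])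
  have eh: "decomp (embBC \<theta> :: ('a \<times> 'b \<times> 'c) op) (embBC Uh) (\<lambda>p. dh (snd p))" by (rule decomp_embBC[OF dH(1)])
  have e1': "decomp (embAC A1 :: ('a \<times> 'b2 \<times> 'c) op) (embAC U1) (\<lambda>p. d1 (fst p, snd (snd p)))" by (rule decomp_embAC[OF d1(1)])
  have e2': "decomp (embAC A2 :: ('a \<times> 'b2 \<times> 'c) op) (embAC U2) (\<lambda>p. d2 (fst p, snd (snd p)))" by (rule decomp_embAC[OF d2(1)])
  have eq': "decomp (embBC \<theta>' :: ('a \<times> 'b2 \<times> 'c) op) (embBC Uq) (\<lambda>p. dq (snd p))" by (rule decomp_embBC[OF dQ(1)])
  have pos1: "\<forall>k. (\<lambda>p. d1 (fst p, snd (snd p))) k > 0" using d1(2) by simp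
  have pos2: "\<forall>k. (\<lambda>p. d2 (fst p, snd (snd p))) k > 0" using d2(2) by simp
  have posh: "\<forall>k. (\<lambda>p. dh (snd p)) k > 0" using dH(2) by simp
  have nnq: "\<And>k. (\<lambda>p. dq (snd p)) k \<ge> 0" using dQ(2) by blast
  define Bs where "Bs = mpow A2 (-b) ** mpow A1 (-a)"
  have B: "mpow (embAC A2) (-b) ** mpow (embAC A1) (-a) = (embAC Bs :: ('a \<times> 'b \<times> 'c) op)"
    unfolding Bs_def by (simp add: mpow_embAC[OF d1(1)] mpow_embAC[OF d2(1)] embAC_mult)
  have B': "mpow (embAC A2) (-b) ** mpow (embAC A1) (-a) = (embAC Bs :: ('a \<times> 'b2 \<times> 'c) op)"
    unfolding Bs_def by (simp add: mpow_embAC[OF d1(1)] mpow_embAC[OF d2(1)] embAC_mult)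
  have chc: "psd (smat (of_real c) (adj (mpow (embAC A2) (-b) ** mpow (embAC A1) (-a)) ** embBC \<theta>' ** (mpow (embAC A2) (-b) ** mpow (embAC A1) (-a))) - \<rho>')"
    if c0: "c \<ge> 0" and hp: "psd (smat (of_real c) (adj (mpow (embAC A2) (-b) ** mpow (embAC A1) (-a)) ** embBC \<theta> ** (mpow (embAC A2) (-b) ** mpow (embAC A1) (-a))) - \<rho>)" for c
  proof -
    have "psd (ext_mid M (smat (of_real c) (embAC (adj Bs) ** embBC \<theta> ** embAC Bs) - \<rho>))"
      using psd_ext_mid[OF ch hp] unfolding B embAC_adj' .
    then show ?thesis unfolding B' embAC_adj' ext_mid_lin ext_mid_conj ext_mid_embBC \<rho>'_def \<theta>'_def .
  qed
  have core_res: "opnorm (mpow \<rho>' (1/2) ** (mpow (embAC A1) a ** mpow (embAC A2) b ** mpow (embBC \<theta>') (- 1) ** mpow (embAC A2) b ** mpow (embAC A1) a) ** mpow \<rho>' (1/2))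
           \<le> opnorm (mpow \<rho> (1/2) ** (mpow (embAC A1) a ** mpow (embAC A2) b ** mpow (embBC \<theta>) (- 1) ** mpow (embAC A2) b ** mpow (embAC A1) a) ** mpow \<rho> (1/2))
       \<and> opnorm (mpow \<rho>' (1/2) ** (mpow (embAC A1) a ** mpow (embAC A2) b ** mpow (embBC \<theta>') (- 1) ** mpow (embAC A2) b ** mpow (embAC A1) a) ** mpow \<rho>' (1/2)) > 0"
  proof (rule core[where Xai = "mpow (embAC A1) (-a)" and Ybi = "mpow (embAC A2) (-b)"
        and Xai' = "mpow (embAC A1) (-a)" and Ybi' = "mpow (embAC A2) (-b)" and Uz = "embBC Uq" and dz = "\<lambda>p. dq (snd p)"])
    show "hermitian (mpow \<rho> (1/2))" by (rule mpow_herm[OF dR(1)])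
    show "mpow \<rho> (1/2) ** mpow \<rho> (1/2) = \<rho>" using nn_sq[OF dR(1)] dR(2) less_imp_le by blast
    show "hermitian \<rho>" by (rule decomp_herm[OF dR(1)])
    show "hermitian (mpow (embAC A1 :: ('a \<times> 'b \<times> 'c) op) a)" by (rule mpow_herm[OF e1])
    show "hermitian (mpow (embAC A1 :: ('a \<times> 'b \<times> 'c) op) (-a))" by (rule mpow_herm[OF e1])
    show "mpow (embAC A1 :: ('a \<times> 'b \<times> 'c) op) a ** mpow (embAC A1 :: ('a \<times> 'b \<times> 'c) op) (-a) = mat 1" by (rule pd_inv[OF e1 pos1]) simp
    show "hermitian (mpow (embAC A2 :: ('a \<times> 'b \<times> 'c) op) b)" by (rule mpow_herm[OF e2])
    show "hermitian (mpow (embAC A2 :: ('a \<times> 'b \<times> 'c) op) (-b))" by (rule mpow_herm[OF e2])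
    show "mpow (embAC A2 :: ('a \<times> 'b \<times> 'c) op) b ** mpow (embAC A2 :: ('a \<times> 'b \<times> 'c) op) (-b) = mat 1" by (rule pd_inv[OF e2 pos2]) simp
    show "hermitian (mpow (embBC \<theta> :: ('a \<times> 'b \<times> 'c) op) (-1/2))" by (rule mpow_herm[OF eh])
    show "hermitian (mpow (embBC \<theta> :: ('a \<times> 'b \<times> 'c) op) (1/2))" by (rule mpow_herm[OF eh])
    show "mpow (embBC \<theta> :: ('a \<times> 'b \<times> 'c) op) (-1/2) ** mpow (embBC \<theta> :: ('a \<times> 'b \<times> 'c) op) (1/2) = mat 1" by (rule pd_inv[OF eh posh]) simp
    show "mpow (embBC \<theta> :: ('a \<times> 'b \<times> 'c) op) (1/2) ** mpow (embBC \<theta> :: ('a \<times> 'b \<times> 'c) op) (1/2) = embBC \<theta>" using nn_sq[OF eh] posh less_imp_le by blast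
    show "mpow (embBC \<theta> :: ('a \<times> 'b \<times> 'c) op) (-1/2) ** mpow (embBC \<theta> :: ('a \<times> 'b \<times> 'c) op) (-1/2) = mpow (embBC \<theta> :: ('a \<times> 'b \<times> 'c) op) (-1)" by (simp add: mpow_mult[OF eh])
    show "hermitian (embBC \<theta> :: ('a \<times> 'b \<times> 'c) op)" by (rule decomp_herm[OF eh])
    show "hermitian (mpow \<rho>' (1/2))" by (rule mpow_herm[OF dR'(1)])
    show "mpow \<rho>' (1/2) ** mpow \<rho>' (1/2) = \<rho>'" using nn_sq[OF dR'(1)] dR'(2) by blast
    show "hermitian (mpow (embAC A1 :: ('a \<times> 'b2 \<times> 'c) op) a)" by (rule mpow_herm[OF e1'])
    show "hermitian (mpow (embAC A1 :: ('a \<times> 'b2 \<times> 'c) op) (-a))" by (rule mpow_herm[OF e1'])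
    show "mpow (embAC A1 :: ('a \<times> 'b2 \<times> 'c) op) (-a) ** mpow (embAC A1 :: ('a \<times> 'b2 \<times> 'c) op) a = mat 1" by (rule pd_inv[OF e1' pos1]) simp
    show "mpow (embAC A1 :: ('a \<times> 'b2 \<times> 'c) op) a ** mpow (embAC A1 :: ('a \<times> 'b2 \<times> 'c) op) (-a) = mat 1" by (rule pd_inv[OF e1' pos1]) simp
    show "hermitian (mpow (embAC A2 :: ('a \<times> 'b2 \<times> 'c) op) b)" by (rule mpow_herm[OF e2'])
    show "hermitian (mpow (embAC A2 :: ('a \<times> 'b2 \<times> 'c) op) (-b))" by (rule mpow_herm[OF e2'])
    show "mpow (embAC A2 :: ('a \<times> 'b2 \<times> 'c) op) (-b) ** mpow (embAC A2 :: ('a \<times> 'b2 \<times> 'c) op) b = mat 1" by (rule pd_inv[OF e2' pos2]) simp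
    show "mpow (embAC A2 :: ('a \<times> 'b2 \<times> 'c) op) b ** mpow (embAC A2 :: ('a \<times> 'b2 \<times> 'c) op) (-b) = mat 1" by (rule pd_inv[OF e2' pos2]) simp
    show "decomp (embBC \<theta>' :: ('a \<times> 'b2 \<times> 'c) op) (embBC Uq) (\<lambda>p. dq (snd p))" by (rule eq')
    show "\<And>k::'a \<times> 'b2 \<times> 'c. 0 \<le> dq (snd k)" using dQ(2) by blast
    show "\<And>c. 0 \<le> c \<Longrightarrow> psd (smat (complex_of_real c) (adj (mpow (embAC A2) (- b) ** mpow (embAC A1) (- a)) ** embBC \<theta> ** (mpow (embAC A2) (- b) ** mpow (embAC A1) (- a))) - \<rho>) \<Longrightarrow>
         psd (smat (complex_of_real c) (adj (mpow (embAC A2) (- b) ** mpow (embAC A1) (- a)) ** embBC \<theta>' ** (mpow (embAC A2) (- b) ** mpow (embAC A1) (- a))) - \<rho>')"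
      by (rule chc)
    show "\<rho>' \<noteq> 0" by (rule nz)
  qed
  then show ?thesis unfolding \<rho>'_def \<theta>'_def by (meson ln_mono_pos)
qed

lemma main_first:
  fixes \<rho> :: "('a::finite \<times> 'b::finite \<times> 'c::finite) op"
    and A1 A2 :: "('b \<times> 'c) op" and \<theta> :: "('a \<times> 'c) op"
    and M :: "'a op \<Rightarrow> ('b2::finite) op" and a b :: real
  assumes pr: "posdef \<rho>" and dr: "density \<rho>" and p1: "\<exists>U d. decomp A1 U d \<and> (\<forall>k. d k > 0)" and p2: "\<exists>U d. decomp A2 U d \<and> (\<forall>k. d k > 0)"
    and pt: "posdef \<theta>" and ch: "quantum_channel M"
  shows "ln (opnorm (mpow (ext_first M \<rho>) (1/2) ** (mpow (embBC A1) a ** mpow (embBC A2) b ** mpow (embAC (ext_first M \<theta>)) (- 1)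
            ** mpow (embBC A2) b ** mpow (embBC A1) a) ** mpow (ext_first M \<rho>) (1/2)))
       \<le> ln (opnorm (mpow \<rho> (1/2) ** (mpow (embBC A1) a ** mpow (embBC A2) b ** mpow (embAC \<theta>) (- 1)
            ** mpow (embBC A2) b ** mpow (embBC A1) a) ** mpow \<rho> (1/2)))"
proof -
  obtain Ur dr where dR: "decomp \<rho> Ur dr" "\<forall>k. dr k > 0" using pd_decomp[OF pr] by blast
  obtain U1 d1 where d1: "decomp A1 U1 d1" "\<forall>k. d1 k > 0" using p1 by blast
  obtain U2 d2 where d2: "decomp A2 U2 d2" "\<forall>k. d2 k > 0" using p2 by blast
  obtain Uh dh where dH: "decomp \<theta> Uh dh" "\<forall>k. dh k > 0" using pd_decomp[OF pt] by blast
  define \<rho>' where "\<rho>' = ext_first M \<rho>"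
  define \<theta>' where "\<theta>' = ext_first M \<theta>"
  have psr': "psd \<rho>'" unfolding \<rho>'_def by (rule psd_ext_first[OF ch posdef_psd[OF pr]])
  obtain Ur' dr' where dR': "decomp \<rho>' Ur' dr'" "\<forall>k. dr' k \<ge> 0" using psd_decomp[OF psr'] by blast
  have pst': "psd \<theta>'" unfolding \<theta>'_def by (rule psd_ext_first[OF ch posdef_psd[OF pt]])
  obtain Uq dq where dQ: "decomp \<theta>' Uq dq" "\<forall>k. dq k \<ge> 0" using psd_decomp[OF pst'] by blast
  have nz: "\<rho>' \<noteq> 0"
  proof
    assume "\<rho>' = 0"
    then have "mtrace \<rho>' = 0" by (simp add: mtrace_def)
    moreover have "mtrace \<rho>' = 1" unfolding \<rho>'_def trace_ext_first[OF ch] using dr by (simp add: density_def)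
    ultimately show False by simp
  qed
  have e1: "decomp (embBC A1 :: ('a \<times> 'b \<times> 'c) op) (embBC U1) (\<lambda>p. d1 (snd p))" by (rule decomp_embBC[OF d1(1)])
  have e2: "decomp (embBC A2 :: ('a \<times> 'b \<times> 'c) op) (embBC U2) (\<lambda>p. d2 (snd p))" by (rule decomp_embBC[OF d2(1)])
  have eh: "decomp (embAC \<theta> :: ('a \<times> 'b \<times> 'c) op) (embAC Uh) (\<lambda>p. dh (fst p, snd (snd p)))" by (rule decomp_embAC[OF dH(1)])
  have e1': "decomp (embBC A1 :: ('b2 \<times> 'b \<times> 'c) op) (embBC U1) (\<lambda>p. d1 (snd p))" by (rule decomp_embBC[OF d1(1)])
  have e2': "decomp (embBC A2 :: ('b2 \<times> 'b \<times> 'c) op) (embBC U2) (\<lambda>p. d2 (snd p))" by (rule decomp_embBC[OF d2(1)])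
  have eq': "decomp (embAC \<theta>' :: ('b2 \<times> 'b \<times> 'c) op) (embAC Uq) (\<lambda>p. dq (fst p, snd (snd p)))" by (rule decomp_embAC[OF dQ(1)])
  have pos1: "\<forall>k. (\<lambda>p. d1 (snd p)) k > 0" using d1(2) by simp
  have pos2: "\<forall>k. (\<lambda>p. d2 (snd p)) k > 0" using d2(2) by simp
  have posh: "\<forall>k. (\<lambda>p. dh (fst p, snd (snd p))) k > 0" using dH(2) by simp
  have nnq: "\<And>k. (\<lambda>p. dq (fst p, snd (snd p))) k \<ge> 0" using dQ(2) by blast
  define Bs where "Bs = mpow A2 (-b) ** mpow A1 (-a)"
  have B: "mpow (embBC A2) (-b) ** mpow (embBC A1) (-a) = (embBC Bs :: ('a \<times> 'b \<times> 'c) op)"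
    unfolding Bs_def by (simp add: mpow_embBC[OF d1(1)] mpow_embBC[OF d2(1)] embBC_mult)
  have B': "mpow (embBC A2) (-b) ** mpow (embBC A1) (-a) = (embBC Bs :: ('b2 \<times> 'b \<times> 'c) op)"
    unfolding Bs_def by (simp add: mpow_embBC[OF d1(1)] mpow_embBC[OF d2(1)] embBC_mult)
  have chc: "psd (smat (of_real c) (adj (mpow (embBC A2) (-b) ** mpow (embBC A1) (-a)) ** embAC \<theta>' ** (mpow (embBC A2) (-b) ** mpow (embBC A1) (-a))) - \<rho>')"
    if c0: "c \<ge> 0" and hp: "psd (smat (of_real c) (adj (mpow (embBC A2) (-b) ** mpow (embBC A1) (-a)) ** embAC \<theta> ** (mpow (embBC A2) (-b) ** mpow (embBC A1) (-a))) - \<rho>)" for c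
  proof -
    have "psd (ext_first M (smat (of_real c) (embBC (adj Bs) ** embAC \<theta> ** embBC Bs) - \<rho>))"
      using psd_ext_first[OF ch hp] unfolding B embBC_adj' .
    then show ?thesis unfolding B' embBC_adj' ext_first_lin ext_first_conj ext_first_embAC \<rho>'_def \<theta>'_def .
  qed
  have core_res: "opnorm (mpow \<rho>' (1/2) ** (mpow (embBC A1) a ** mpow (embBC A2) b ** mpow (embAC \<theta>') (- 1) ** mpow (embBC A2) b ** mpow (embBC A1) a) ** mpow \<rho>' (1/2))
           \<le> opnorm (mpow \<rho> (1/2) ** (mpow (embBC A1) a ** mpow (embBC A2) b ** mpow (embAC \<theta>) (- 1) ** mpow (embBC A2) b ** mpow (embBC A1) a) ** mpow \<rho> (1/2))
       \<and> opnorm (mpow \<rho>' (1/2) ** (mpow (embBC A1) a ** mpow (embBC A2) b ** mpow (embAC \<theta>') (- 1) ** mpow (embBC A2) b ** mpow (embBC A1) a) ** mpow \<rho>' (1/2)) > 0"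
  proof (rule core[where Xai = "mpow (embBC A1) (-a)" and Ybi = "mpow (embBC A2) (-b)"
        and Xai' = "mpow (embBC A1) (-a)" and Ybi' = "mpow (embBC A2) (-b)" and Uz = "embAC Uq" and dz = "\<lambda>p. dq (fst p, snd (snd p))"])
    show "hermitian (mpow \<rho> (1/2))" by (rule mpow_herm[OF dR(1)])
    show "mpow \<rho> (1/2) ** mpow \<rho> (1/2) = \<rho>" using nn_sq[OF dR(1)] dR(2) less_imp_le by blast
    show "hermitian \<rho>" by (rule decomp_herm[OF dR(1)])
    show "hermitian (mpow (embBC A1 :: ('a \<times> 'b \<times> 'c) op) a)" by (rule mpow_herm[OF e1])
    show "hermitian (mpow (embBC A1 :: ('a \<times> 'b \<times> 'c) op) (-a))" by (rule mpow_herm[OF e1])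
    show "mpow (embBC A1 :: ('a \<times> 'b \<times> 'c) op) a ** mpow (embBC A1 :: ('a \<times> 'b \<times> 'c) op) (-a) = mat 1" by (rule pd_inv[OF e1 pos1]) simp
    show "hermitian (mpow (embBC A2 :: ('a \<times> 'b \<times> 'c) op) b)" by (rule mpow_herm[OF e2])
    show "hermitian (mpow (embBC A2 :: ('a \<times> 'b \<times> 'c) op) (-b))" by (rule mpow_herm[OF e2])
    show "mpow (embBC A2 :: ('a \<times> 'b \<times> 'c) op) b ** mpow (embBC A2 :: ('a \<times> 'b \<times> 'c) op) (-b) = mat 1" by (rule pd_inv[OF e2 pos2]) simp
    show "hermitian (mpow (embAC \<theta> :: ('a \<times> 'b \<times> 'c) op) (-1/2))" by (rule mpow_herm[OF eh])
    show "hermitian (mpow (embAC \<theta> :: ('a \<times> 'b \<times> 'c) op) (1/2))" by (rule mpow_herm[OF eh])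
    show "mpow (embAC \<theta> :: ('a \<times> 'b \<times> 'c) op) (-1/2) ** mpow (embAC \<theta> :: ('a \<times> 'b \<times> 'c) op) (1/2) = mat 1" by (rule pd_inv[OF eh posh]) simp
    show "mpow (embAC \<theta> :: ('a \<times> 'b \<times> 'c) op) (1/2) ** mpow (embAC \<theta> :: ('a \<times> 'b \<times> 'c) op) (1/2) = embAC \<theta>" using nn_sq[OF eh] posh less_imp_le by blast
    show "mpow (embAC \<theta> :: ('a \<times> 'b \<times> 'c) op) (-1/2) ** mpow (embAC \<theta> :: ('a \<times> 'b \<times> 'c) op) (-1/2) = mpow (embAC \<theta> :: ('a \<times> 'b \<times> 'c) op) (-1)" by (simp add: mpow_mult[OF eh])
    show "hermitian (embAC \<theta> :: ('a \<times> 'b \<times> 'c) op)" by (rule decomp_herm[OF eh])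
    show "hermitian (mpow \<rho>' (1/2))" by (rule mpow_herm[OF dR'(1)])
    show "mpow \<rho>' (1/2) ** mpow \<rho>' (1/2) = \<rho>'" using nn_sq[OF dR'(1)] dR'(2) by blast
    show "hermitian (mpow (embBC A1 :: ('b2 \<times> 'b \<times> 'c) op) a)" by (rule mpow_herm[OF e1'])
    show "hermitian (mpow (embBC A1 :: ('b2 \<times> 'b \<times> 'c) op) (-a))" by (rule mpow_herm[OF e1'])
    show "mpow (embBC A1 :: ('b2 \<times> 'b \<times> 'c) op) (-a) ** mpow (embBC A1 :: ('b2 \<times> 'b \<times> 'c) op) a = mat 1" by (rule pd_inv[OF e1' pos1]) simp
    show "mpow (embBC A1 :: ('b2 \<times> 'b \<times> 'c) op) a ** mpow (embBC A1 :: ('b2 \<times> 'b \<times> 'c) op) (-a) = mat 1" by (rule pd_inv[OF e1' pos1]) simp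
    show "hermitian (mpow (embBC A2 :: ('b2 \<times> 'b \<times> 'c) op) b)" by (rule mpow_herm[OF e2'])
    show "hermitian (mpow (embBC A2 :: ('b2 \<times> 'b \<times> 'c) op) (-b))" by (rule mpow_herm[OF e2'])
    show "mpow (embBC A2 :: ('b2 \<times> 'b \<times> 'c) op) (-b) ** mpow (embBC A2 :: ('b2 \<times> 'b \<times> 'c) op) b = mat 1" by (rule pd_inv[OF e2' pos2]) simp
    show "mpow (embBC A2 :: ('b2 \<times> 'b \<times> 'c) op) b ** mpow (embBC A2 :: ('b2 \<times> 'b \<times> 'c) op) (-b) = mat 1" by (rule pd_inv[OF e2' pos2]) simp
    show "decomp (embAC \<theta>' :: ('b2 \<times> 'b \<times> 'c) op) (embAC Uq) (\<lambda>p. dq (fst p, snd (snd p)))" by (rule eq')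
    show "\<And>k::'b2 \<times> 'b \<times> 'c. 0 \<le> dq (fst k, snd (snd k))" using dQ(2) by blast
    show "\<And>c. 0 \<le> c \<Longrightarrow> psd (smat (complex_of_real c) (adj (mpow (embBC A2) (- b) ** mpow (embBC A1) (- a)) ** embAC \<theta> ** (mpow (embBC A2) (- b) ** mpow (embBC A1) (- a))) - \<rho>) \<Longrightarrow>
         psd (smat (complex_of_real c) (adj (mpow (embBC A2) (- b) ** mpow (embBC A1) (- a)) ** embAC \<theta>' ** (mpow (embBC A2) (- b) ** mpow (embBC A1) (- a))) - \<rho>')"
      by (rule chc)
    show "\<rho>' \<noteq> 0" by (rule nz)
  qed
  then show ?thesis unfolding \<rho>'_def \<theta>'_def by (meson ln_mono_pos)
qed

theorem mainTheorem15:
  fixes \<rho> :: "('a::finite \<times> 'b::finite \<times> 'c::finite) op"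
    and \<tau> :: "('a \<times> 'c) op" and \<theta> :: "('b \<times> 'c) op" and \<omega> :: "'c op"
    and N :: "'a op \<Rightarrow> ('a2::finite) op" and M :: "'b op \<Rightarrow> ('b2::finite) op"
  assumes "posdef \<rho>" "density \<rho>" "posdef \<tau>" "density \<tau>"
    and "posdef \<theta>" "density \<theta>" "posdef \<omega>" "density \<omega>"
    and "quantum_channel N" and "quantum_channel M"
  shows "(Delta_max \<rho> (Tau (embAC \<tau>)) (Omega (embC \<omega>)) (Theta (embBC \<theta>))
      \<ge> Delta_max (ext_mid M \<rho>) (Tau (embAC \<tau>)) (Omega (embC \<omega>)) (Theta (embBC (ext_first M \<theta>)))) \<and>
   (Delta_max \<rho> (Omega (embC \<omega>)) (Tau (embAC \<tau>)) (Theta (embBC \<theta>))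
      \<ge> Delta_max (ext_mid M \<rho>) (Omega (embC \<omega>)) (Tau (embAC \<tau>)) (Theta (embBC (ext_first M \<theta>)))) \<and>
   (Delta_max \<rho> (Omega (embC \<omega>)) (Theta (embBC \<theta>)) (Tau (embAC \<tau>))
      \<ge> Delta_max (ext_first N \<rho>) (Omega (embC \<omega>)) (Theta (embBC \<theta>)) (Tau (embAC (ext_first N \<tau>)))) \<and>
   (Delta_max \<rho> (Theta (embBC \<theta>)) (Omega (embC \<omega>)) (Tau (embAC \<tau>))
      \<ge> Delta_max (ext_first N \<rho>) (Theta (embBC \<theta>)) (Omega (embC \<omega>)) (Tau (embAC (ext_first N \<tau>))))"
  proof -
  obtain Uw dw where dW: "decomp \<omega> Uw dw" "\<forall>k. dw k > 0" using pd_decomp[OF assms(7)] by blast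
  have pw1: "\<exists>U d. decomp (embR \<omega> :: ('a \<times> 'c) op) U d \<and> (\<forall>k. d k > 0)"
    using decomp_embR[OF dW(1)] dW(2) by blast
  have pw2: "\<exists>U d. decomp (embR \<omega> :: ('b \<times> 'c) op) U d \<and> (\<forall>k. d k > 0)"
    using decomp_embR[OF dW(1)] dW(2) by blast
  have pt: "\<exists>U d. decomp \<tau> U d \<and> (\<forall>k. d k > 0)" by (rule pd_decomp[OF assms(3)])
  have ph: "\<exists>U d. decomp \<theta> U d \<and> (\<forall>k. d k > 0)" by (rule pd_decomp[OF assms(5)])
  have i1: "Delta_max (ext_mid M \<rho>) (Tau (embAC \<tau>)) (Omega (embC \<omega>)) (Theta (embBC (ext_first M \<theta>)))
      \<le> Delta_max \<rho> (Tau (embAC \<tau>)) (Omega (embC \<omega>)) (Theta (embBC \<theta>))"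
    using main_mid[OF assms(1,2) pt pw1 assms(5) assms(10), of "- 1 / 2" "- (- 1) / 2"]
    unfolding Delta_max_def Kminus1_def embC_AC by simp
  have i2: "Delta_max (ext_mid M \<rho>) (Omega (embC \<omega>)) (Tau (embAC \<tau>)) (Theta (embBC (ext_first M \<theta>)))
      \<le> Delta_max \<rho> (Omega (embC \<omega>)) (Tau (embAC \<tau>)) (Theta (embBC \<theta>))"
    using main_mid[OF assms(1,2) pw1 pt assms(5) assms(10), of "- (- 1) / 2" "- 1 / 2"]
    unfolding Delta_max_def Kminus1_def embC_AC by simp
  have i3: "Delta_max (ext_first N \<rho>) (Omega (embC \<omega>)) (Theta (embBC \<theta>)) (Tau (embAC (ext_first N \<tau>)))
      \<le> Delta_max \<rho> (Omega (embC \<omega>)) (Theta (embBC \<theta>)) (Tau (embAC \<tau>))"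
    using main_first[OF assms(1,2) pw2 ph assms(3) assms(9), of "- (- 1) / 2" "- 1 / 2"]
    unfolding Delta_max_def Kminus1_def embC_BC by simp
  have i4: "Delta_max (ext_first N \<rho>) (Theta (embBC \<theta>)) (Omega (embC \<omega>)) (Tau (embAC (ext_first N \<tau>)))
      \<le> Delta_max \<rho> (Theta (embBC \<theta>)) (Omega (embC \<omega>)) (Tau (embAC \<tau>))"
    using main_first[OF assms(1,2) ph pw2 assms(3) assms(9), of "- 1 / 2" "- (- 1) / 2"]
    unfolding Delta_max_def Kminus1_def embC_BC by simp
  show ?thesis using i1 i2 i3 i4 by simp
qed

end
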